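(* Let $R$ be a commutative noetherian local ring containing $\mathbf{Z}_p$ as a subring, let $A=R/pR$ with maximal ideal $\mathfrak{m}$, and let $(n_i(A))_{i\ge1}$ be the non-decreasing sequence of integers in which each integer $k\ge0$ occurs exactly $\dim_{A/\mathfrak{m}}\mathfrak{m}^k/\mathfrak{m}^{k+1}$ times. Let $r_1,\dots,r_s\in R$ and let $\phi_1,\dots,\phi_s:R\to\mathbf{Z}_p$ be ring homomorphisms. Then the determinant of the $s\times s$ matrix $(\phi_i(r_j))$ is divisible by $p^{A(s)}$, where $A(s)=n_1(A)+n_2(A)+\dots+n_s(A)$. *)

theory Defs
  imports "HOL-Computational_Algebra.Primes" "HOL-Algebra.Ring_Divisibility" "HOL-Algebra.Ideal_Product" "HOL-Algebra.QuotRing" "HOL-Combinatorics.Permutations"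
begin

text \<open>Z_p realised as the inverse limit of the rings Z/p^n Z: an element is a
  compatible sequence of residues x n in {0..<p^n}.\<close>

definition Zp :: "int \<Rightarrow> (nat \<Rightarrow> int) ring" where
  "Zp p = \<lparr> carrier = {x. (\<forall>n. 0 \<le> x n \<and> x n < p ^ n) \<and> (\<forall>n. x (Suc n) mod p ^ n = x n)},
            mult = (\<lambda>x y n. (x n * y n) mod p ^ n),
            one = (\<lambda>n. 1 mod p ^ n),
            zero = (\<lambda>n. 0),
            add = (\<lambda>x y n. (x n + y n) mod p ^ n) \<rparr>"

definition Zp_p :: "int \<Rightarrow> nat \<Rightarrow> int" where
  "Zp_p p = (\<lambda>n. p mod p ^ n)"

definition local_ring :: "('a, 'b) ring_scheme \<Rightarrow> bool" where
  "local_ring R \<longleftrightarrow> cring R \<and> (\<exists>!M. maximalideal M R)"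

definition max_ideal :: "('a, 'b) ring_scheme \<Rightarrow> 'a set" where
  "max_ideal R = (THE M. maximalideal M R)"

definition ideal_power :: "('a, 'b) ring_scheme \<Rightarrow> 'a set \<Rightarrow> nat \<Rightarrow> 'a set" where
  "ideal_power R I k = I [^]\<^bsub>ideals_set R\<^esub> k"

text \<open>S is a set of representatives in m^k of a basis of the (A/m)-vector space
  m^k/m^(k+1): linear independence and spanning modulo m^(k+1), with scalars in A
  taken modulo m.\<close>
definition graded_basis :: "('a, 'b) ring_scheme \<Rightarrow> 'a set \<Rightarrow> nat \<Rightarrow> 'a set \<Rightarrow> bool" where
  "graded_basis A M k S \<longleftrightarrow>
     finite S \<and> S \<subseteq> ideal_power A M k \<and>
     (\<forall>a \<in> S \<rightarrow> carrier A.
        (\<Oplus>\<^bsub>A\<^esub> s\<in>S. a s \<otimes>\<^bsub>A\<^esub> s) \<in> ideal_power A M (Suc k) \<longrightarrow> (\<forall>s\<in>S. a s \<in> M)) \<and>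
     (\<forall>x \<in> ideal_power A M k. \<exists>a \<in> S \<rightarrow> carrier A.
        x \<ominus>\<^bsub>A\<^esub> (\<Oplus>\<^bsub>A\<^esub> s\<in>S. a s \<otimes>\<^bsub>A\<^esub> s) \<in> ideal_power A M (Suc k))"

definition graded_dim :: "('a, 'b) ring_scheme \<Rightarrow> nat \<Rightarrow> nat" where
  "graded_dim A k = card (SOME S. graded_basis A (max_ideal A) k S)"

text \<open>n_i(A) (i \<ge> 1): the non-decreasing sequence in which k occurs graded_dim A k times.\<close>
definition n_seq :: "('a, 'b) ring_scheme \<Rightarrow> nat \<Rightarrow> nat" where
  "n_seq A i = (LEAST k. i \<le> (\<Sum>j\<le>k. graded_dim A j))"

definition n_seq_has :: "('a, 'b) ring_scheme \<Rightarrow> nat \<Rightarrow> bool" where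
  "n_seq_has A s \<longleftrightarrow> (\<exists>k. s \<le> (\<Sum>j\<le>k. graded_dim A j))"

definition A_sum :: "('a, 'b) ring_scheme \<Rightarrow> nat \<Rightarrow> nat" where
  "A_sum A s = (\<Sum>i=1..s. n_seq A i)"

definition ring_det :: "('c, 'd) ring_scheme \<Rightarrow> nat \<Rightarrow> (nat \<Rightarrow> nat \<Rightarrow> 'c) \<Rightarrow> 'c" where
  "ring_det K s M =
     (\<Oplus>\<^bsub>K\<^esub> \<sigma> \<in> {\<sigma>. \<sigma> permutes {0..<s}}.
        (if sign \<sigma> = (1::int) then \<one>\<^bsub>K\<^esub> else \<ominus>\<^bsub>K\<^esub> \<one>\<^bsub>K\<^esub>) \<otimes>\<^bsub>K\<^esub>
        (\<Otimes>\<^bsub>K\<^esub> i \<in> {0..<s}. M i (\<sigma> i)))"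

end

theory Submission imports Defs Jordan_Normal_Form.Determinant begin

hide_const (open) Ring_Hom.ring_hom

section \<open>Zp basics\<close>

locale zp = fixes p :: int assumes p2: "p \<ge> 2"
begin

lemma ppos[simp]: "p ^ n > 0" using p2 by simp

lemma carr_iff: "x \<in> carrier (Zp p) \<longleftrightarrow> (\<forall>n. 0 \<le> x n \<and> x n < p ^ n) \<and> (\<forall>n. x (Suc n) mod p ^ n = x n)"
  by (simp add: Zp_def)

lemma carr_bounds: "x \<in> carrier (Zp p) \<Longrightarrow> 0 \<le> x n \<and> x n < p ^ n"
  by (simp add: Zp_def)

lemma carr_mod_self: "x \<in> carrier (Zp p) \<Longrightarrow> x n mod p ^ n = x n"
  using carr_bounds[of x n] by simp

lemma carr_compat: assumes "x \<in> carrier (Zp p)" "m \<le> n" shows "x n mod p ^ m = x m"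
  using assms(2)
proof (induction n)
  case 0 then show ?case using carr_bounds[OF assms(1), of 0] by simp
next
  case (Suc n)
  show ?case
  proof (cases "m = Suc n")
    case True then show ?thesis by (simp only: carr_mod_self[OF assms(1)])
  next
    case False
    hence "m \<le> n" using Suc by simp
    have dv: "p ^ m dvd p ^ n" using \<open>m \<le> n\<close> by (simp add: le_imp_power_dvd)
    have "x (Suc n) mod p ^ m = (x (Suc n) mod p ^ n) mod p ^ m"
      using dv by (simp add: mod_mod_cancel)
    also have "\<dots> = x n mod p ^ m" using assms(1) by (simp add: Zp_def)
    finally show ?thesis using Suc.IH \<open>m \<le> n\<close> by simp
  qed
qed

lemma carr_zero_at0: "x \<in> carrier (Zp p) \<Longrightarrow> x 0 = 0"
  using carr_bounds[of x 0] by simp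

lemma add_Zp[simp]: "(x \<oplus>\<^bsub>Zp p\<^esub> y) n = (x n + y n) mod p ^ n"
  by (simp add: Zp_def)
lemma mult_Zp[simp]: "(x \<otimes>\<^bsub>Zp p\<^esub> y) n = (x n * y n) mod p ^ n"
  by (simp add: Zp_def)
lemma one_Zp[simp]: "\<one>\<^bsub>Zp p\<^esub> n = 1 mod p ^ n"
  by (simp add: Zp_def)
lemma zero_Zp[simp]: "\<zero>\<^bsub>Zp p\<^esub> n = 0"
  by (simp add: Zp_def)

lemma add_closed: assumes "x \<in> carrier (Zp p)" "y \<in> carrier (Zp p)"
  shows "x \<oplus>\<^bsub>Zp p\<^esub> y \<in> carrier (Zp p)"
proof -
  have "(x (Suc n) + y (Suc n)) mod p ^ Suc n mod p ^ n = (x n + y n) mod p ^ n" for n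
  proof -
    have dv: "p ^ n dvd p ^ Suc n" by (simp add: le_imp_power_dvd)
    have "(x (Suc n) + y (Suc n)) mod p ^ Suc n mod p ^ n = (x (Suc n) + y (Suc n)) mod p ^ n"
      using dv by (simp add: mod_mod_cancel)
    also have "\<dots> = (x (Suc n) mod p ^ n + y (Suc n) mod p ^ n) mod p ^ n"
      by (simp add: mod_add_eq)
    finally show ?thesis using assms by (simp add: Zp_def)
  qed
  then show ?thesis unfolding carr_iff by (simp add: Zp_def)
qed

lemma mult_closed: assumes "x \<in> carrier (Zp p)" "y \<in> carrier (Zp p)"
  shows "x \<otimes>\<^bsub>Zp p\<^esub> y \<in> carrier (Zp p)"
proof -
  have "(x (Suc n) * y (Suc n)) mod p ^ Suc n mod p ^ n = (x n * y n) mod p ^ n" for n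
  proof -
    have dv: "p ^ n dvd p ^ Suc n" by (simp add: le_imp_power_dvd)
    have "(x (Suc n) * y (Suc n)) mod p ^ Suc n mod p ^ n = (x (Suc n) * y (Suc n)) mod p ^ n"
      using dv by (simp add: mod_mod_cancel)
    also have "\<dots> = (x (Suc n) mod p ^ n * (y (Suc n) mod p ^ n)) mod p ^ n"
      by (simp add: mod_mult_eq)
    finally show ?thesis using assms by (simp add: Zp_def)
  qed
  then show ?thesis unfolding carr_iff by (simp add: Zp_def)
qed

lemma one_closed: "\<one>\<^bsub>Zp p\<^esub> \<in> carrier (Zp p)"
proof -
  have "1 mod p ^ Suc n mod p ^ n = 1 mod p ^ n" for n
    by (simp add: le_imp_power_dvd mod_mod_cancel)
  then show ?thesis unfolding carr_iff by (simp add: Zp_def)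
qed

lemma zero_closed: "\<zero>\<^bsub>Zp p\<^esub> \<in> carrier (Zp p)"
  unfolding carr_iff by (simp add: Zp_def)

definition neg :: "(nat \<Rightarrow> int) \<Rightarrow> nat \<Rightarrow> int" where "neg x = (\<lambda>n. (- x n) mod p ^ n)"

lemma neg_closed: assumes "x \<in> carrier (Zp p)" shows "neg x \<in> carrier (Zp p)"
proof -
  have "(- x (Suc n)) mod p ^ Suc n mod p ^ n = (- x n) mod p ^ n" for n
  proof -
    have "(- x (Suc n)) mod p ^ Suc n mod p ^ n = (- x (Suc n)) mod p ^ n"
      by (simp add: le_imp_power_dvd mod_mod_cancel)
    also have "\<dots> = (- (x (Suc n) mod p ^ n)) mod p ^ n" by (simp add: mod_minus_eq)
    finally show ?thesis using assms by (simp add: Zp_def)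
  qed
  then show ?thesis unfolding carr_iff neg_def by simp
qed

lemma feq: "(\<And>n. x n = y n) \<Longrightarrow> x = y" by auto

lemma Zp_cring: "cring (Zp p)"
proof (rule cringI)
  show "abelian_group (Zp p)"
  proof (rule abelian_groupI)
    fix x y z assume x: "x \<in> carrier (Zp p)" and y: "y \<in> carrier (Zp p)" and z: "z \<in> carrier (Zp p)"
    show "x \<oplus>\<^bsub>Zp p\<^esub> y \<in> carrier (Zp p)" using add_closed x y .
    show "x \<oplus>\<^bsub>Zp p\<^esub> y \<oplus>\<^bsub>Zp p\<^esub> z = x \<oplus>\<^bsub>Zp p\<^esub> (y \<oplus>\<^bsub>Zp p\<^esub> z)"
      by (rule feq, simp add: mod_add_left_eq mod_add_right_eq add.assoc)
    show "x \<oplus>\<^bsub>Zp p\<^esub> y = y \<oplus>\<^bsub>Zp p\<^esub> x" by (rule feq, simp add: add.commute)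
  next
    show "\<zero>\<^bsub>Zp p\<^esub> \<in> carrier (Zp p)" by (rule zero_closed)
  next
    fix x assume x: "x \<in> carrier (Zp p)"
    show "\<zero>\<^bsub>Zp p\<^esub> \<oplus>\<^bsub>Zp p\<^esub> x = x" by (rule feq, simp add: carr_mod_self[OF x])
    show "\<exists>y\<in>carrier (Zp p). y \<oplus>\<^bsub>Zp p\<^esub> x = \<zero>\<^bsub>Zp p\<^esub>"
    proof (intro bexI)
      show "neg x \<oplus>\<^bsub>Zp p\<^esub> x = \<zero>\<^bsub>Zp p\<^esub>"
        by (rule feq, simp add: neg_def mod_add_left_eq)
    qed (rule neg_closed[OF x])
  qed
next
  show "comm_monoid (Zp p)"
  proof (rule comm_monoidI)
    fix x y z assume x: "x \<in> carrier (Zp p)" and y: "y \<in> carrier (Zp p)" and z: "z \<in> carrier (Zp p)"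
    show "x \<otimes>\<^bsub>Zp p\<^esub> y \<in> carrier (Zp p)" using mult_closed x y .
    show "x \<otimes>\<^bsub>Zp p\<^esub> y \<otimes>\<^bsub>Zp p\<^esub> z = x \<otimes>\<^bsub>Zp p\<^esub> (y \<otimes>\<^bsub>Zp p\<^esub> z)"
      by (rule feq, simp add: mod_mult_left_eq mod_mult_right_eq mult.assoc)
    show "x \<otimes>\<^bsub>Zp p\<^esub> y = y \<otimes>\<^bsub>Zp p\<^esub> x" by (rule feq, simp add: mult.commute)
  next
    show "\<one>\<^bsub>Zp p\<^esub> \<in> carrier (Zp p)" by (rule one_closed)
  next
    fix x assume x: "x \<in> carrier (Zp p)"
    show "\<one>\<^bsub>Zp p\<^esub> \<otimes>\<^bsub>Zp p\<^esub> x = x" by (rule feq, simp add: mod_mult_left_eq carr_mod_self[OF x])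
  qed
next
  fix x y z assume x: "x \<in> carrier (Zp p)" and y: "y \<in> carrier (Zp p)" and z: "z \<in> carrier (Zp p)"
  show "(x \<oplus>\<^bsub>Zp p\<^esub> y) \<otimes>\<^bsub>Zp p\<^esub> z = x \<otimes>\<^bsub>Zp p\<^esub> z \<oplus>\<^bsub>Zp p\<^esub> y \<otimes>\<^bsub>Zp p\<^esub> z"
    by (rule feq, simp add: mod_mult_left_eq mod_add_eq distrib_right)
qed

sublocale Z: cring "Zp p" by (rule Zp_cring)

lemma a_inv_Zp: assumes "x \<in> carrier (Zp p)" shows "(\<ominus>\<^bsub>Zp p\<^esub> x) n = (- x n) mod p ^ n"
proof -
  have "neg x \<oplus>\<^bsub>Zp p\<^esub> x = \<zero>\<^bsub>Zp p\<^esub>"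
    by (rule feq, simp add: neg_def mod_add_left_eq)
  hence "\<ominus>\<^bsub>Zp p\<^esub> x = neg x"
    using Z.minus_equality[OF _ assms neg_closed[OF assms]] by simp
  thus ?thesis by (simp add: neg_def)
qed

end


primrec nmul :: "('a, 'b) ring_scheme \<Rightarrow> nat \<Rightarrow> 'a" where
  "nmul R 0 = \<zero>\<^bsub>R\<^esub>"
| "nmul R (Suc n) = nmul R n \<oplus>\<^bsub>R\<^esub> \<one>\<^bsub>R\<^esub>"

lemma nmul_closed: "ring R \<Longrightarrow> nmul R n \<in> carrier R"
  by (induction n) (auto intro: ring.ring_simprules(1,2,5,6))

lemma nmul_hom: assumes "h \<in> ring_hom R S" "ring R" "ring S" shows "h (nmul R n) = nmul S n"
proof (induction n)
  case 0 then show ?case using ring_hom_zero[OF assms] by simp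
next
  case (Suc n) then show ?case
    using ring_hom_add[OF assms(1) nmul_closed[OF assms(2)] ring.ring_simprules(6)[OF assms(2)]]
      ring_hom_one[OF assms(1)] by simp
qed

context zp begin

lemma nmul_Zp: "nmul (Zp p) n m = int n mod p ^ m"
  by (induction n) (simp_all, metis add.commute mod_add_right_eq)

lemma Zp_p_nmul: "Zp_p p = nmul (Zp p) (nat p)"
  using p2 by (intro feq) (simp add: nmul_Zp Zp_p_def)

lemma Zp_p_closed: "Zp_p p \<in> carrier (Zp p)"
  using Zp_p_nmul nmul_closed Z.ring_axioms by metis

lemma finsum_Zp: assumes "finite B" "f \<in> B \<rightarrow> carrier (Zp p)"
  shows "(\<Oplus>\<^bsub>Zp p\<^esub> b\<in>B. f b) n = (\<Sum>b\<in>B. f b n) mod p ^ n"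
  using assms
proof (induction B rule: finite_induct)
  case empty then show ?case by simp
next
  case (insert x F)
  have "(\<Oplus>\<^bsub>Zp p\<^esub> b\<in>insert x F. f b) = f x \<oplus>\<^bsub>Zp p\<^esub> (\<Oplus>\<^bsub>Zp p\<^esub> b\<in>F. f b)"
    using insert by (intro Z.finsum_insert) auto
  then show ?case using insert by (simp add: mod_add_right_eq)
qed

lemma finprod_Zp: assumes "finite B" "f \<in> B \<rightarrow> carrier (Zp p)"
  shows "(\<Otimes>\<^bsub>Zp p\<^esub> b\<in>B. f b) n = (\<Prod>b\<in>B. f b n) mod p ^ n"
  using assms
proof (induction B rule: finite_induct)
  case empty then show ?case by simp
next
  case (insert x F)
  have "(\<Otimes>\<^bsub>Zp p\<^esub> b\<in>insert x F. f b) = f x \<otimes>\<^bsub>Zp p\<^esub> (\<Otimes>\<^bsub>Zp p\<^esub> b\<in>F. f b)"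
    using insert by (intro Z.finprod_insert) auto
  then show ?case using insert by (simp add: mod_mult_right_eq)
qed

lemma pow_Zp: assumes "x \<in> carrier (Zp p)" shows "(x [^]\<^bsub>Zp p\<^esub> (k::nat)) n = (x n ^ k) mod p ^ n"
proof (induction k)
  case 0 then show ?case by simp
next
  case (Suc k) then show ?case by (simp, metis mod_mult_left_eq mult.commute)
qed

lemma pow_Zp_p: "(Zp_p p [^]\<^bsub>Zp p\<^esub> (k::nat)) n = (p ^ k) mod p ^ n"
  using pow_Zp[OF Zp_p_closed] by (simp add: Zp_p_def power_mod)

lemma divides_crit: assumes x: "x \<in> carrier (Zp p)" and xK: "x K = 0"
  shows "(Zp_p p [^]\<^bsub>Zp p\<^esub> K) divides\<^bsub>Zp p\<^esub> x"
proof -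
  have dvd: "p ^ K dvd x (n + K)" for n
  proof -
    have "x (n + K) mod p ^ K = x K" using carr_compat[OF x] by simp
    thus ?thesis using xK by (simp add: dvd_eq_mod_eq_0)
  qed
  define c where "c = (\<lambda>n. x (n + K) div p ^ K)"
  have xc: "x (n + K) = p ^ K * c n" for n using dvd[of n] by (simp add: c_def)
  have c_b: "0 \<le> c n \<and> c n < p ^ n" for n
  proof -
    have a: "0 \<le> x (n + K)" "x (n + K) < p ^ (n + K)" using carr_bounds[OF x] by auto
    have "0 \<le> p ^ K * c n" using a(1) xc[of n] by simp
    hence c0: "0 \<le> c n" using ppos[of K] by (simp add: zero_le_mult_iff)
    have "p ^ K * c n < p ^ K * p ^ n" using a(2) xc[of n] by (simp add: power_add)
    hence "c n < p ^ n" using ppos[of K] by (simp only: mult_less_cancel_left_pos)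
    thus ?thesis using c0 by simp
  qed
  have c_c: "c (Suc n) mod p ^ n = c n" for n
  proof -
    have e1: "x (Suc n + K) mod p ^ (n + K) = x (n + K)" using carr_compat[OF x, of "n+K" "Suc n + K"] by simp
    have e2: "p ^ (n + K) = p ^ K * p ^ n" by (simp add: power_add)
    have "x (Suc n + K) = p ^ K * c (Suc n)" using xc[of "Suc n"] by simp
    hence "p ^ K * c (Suc n) mod (p ^ K * p ^ n) = p ^ K * c n" using e1 unfolding e2 xc[of n] by simp
    hence "p ^ K * (c (Suc n) mod p ^ n) = p ^ K * c n" by (simp only: mult_mod_right)
    thus ?thesis using p2 by auto
  qed
  have cC: "c \<in> carrier (Zp p)" unfolding carr_iff using c_b c_c by simp
  have "x = (Zp_p p [^]\<^bsub>Zp p\<^esub> K) \<otimes>\<^bsub>Zp p\<^esub> c"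
  proof (rule feq)
    fix n
    have "((p ^ K mod p ^ n) * c n) mod p ^ n = (p ^ K * c n) mod p ^ n" by (simp add: mod_mult_left_eq)
    also have "\<dots> = x (n + K) mod p ^ n" using xc by simp
    also have "\<dots> = x n" using carr_compat[OF x, of n "n+K"] by simp
    finally show "x n = ((Zp_p p [^]\<^bsub>Zp p\<^esub> K) \<otimes>\<^bsub>Zp p\<^esub> c) n" by (simp add: pow_Zp_p)
  qed
  thus ?thesis using cC unfolding factor_def by blast
qed

lemma ring_det_comp:
  assumes M: "\<And>i j. i < s \<Longrightarrow> j < s \<Longrightarrow> M i j \<in> carrier (Zp p)"
  shows "ring_det (Zp p) s M n = (\<Sum>\<sigma>\<in>{\<sigma>. \<sigma> permutes {0..<s}}. sign \<sigma> * (\<Prod>i\<in>{0..<s}. M i (\<sigma> i) n)) mod p ^ n"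
proof -
  let ?P = "{\<sigma>. \<sigma> permutes {0..<s}}"
  have fP: "finite ?P" by (simp add: finite_permutations)
  have sg: "(if sign \<sigma> = (1::int) then \<one>\<^bsub>Zp p\<^esub> else \<ominus>\<^bsub>Zp p\<^esub> \<one>\<^bsub>Zp p\<^esub>) \<in> carrier (Zp p)" for \<sigma>
    by simp
  have sgc: "(if sign \<sigma> = (1::int) then \<one>\<^bsub>Zp p\<^esub> else \<ominus>\<^bsub>Zp p\<^esub> \<one>\<^bsub>Zp p\<^esub>) n = sign \<sigma> mod p ^ n" for \<sigma>
    by (cases \<sigma> rule: sign_cases) (simp_all add: a_inv_Zp[OF one_closed] mod_minus_eq)
  have Mc: "\<sigma> \<in> ?P \<Longrightarrow> (\<lambda>i. M i (\<sigma> i)) \<in> {0..<s} \<rightarrow> carrier (Zp p)" for \<sigma>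
    using M permutes_in_image by fastforce
  have "ring_det (Zp p) s M n = (\<Sum>\<sigma>\<in>?P. ((if sign \<sigma> = (1::int) then \<one>\<^bsub>Zp p\<^esub> else \<ominus>\<^bsub>Zp p\<^esub> \<one>\<^bsub>Zp p\<^esub>) \<otimes>\<^bsub>Zp p\<^esub>
        (\<Otimes>\<^bsub>Zp p\<^esub> i \<in> {0..<s}. M i (\<sigma> i))) n) mod p ^ n"
    unfolding ring_det_def using Mc by (intro finsum_Zp fP) (auto intro!: Z.finprod_closed)
  also have "\<dots> = (\<Sum>\<sigma>\<in>?P. (sign \<sigma> mod p ^ n * ((\<Prod>i\<in>{0..<s}. M i (\<sigma> i) n) mod p ^ n)) mod p ^ n) mod p ^ n"
    by (intro arg_cong2[where f="(mod)"] sum.cong refl) (simp add: sgc finprod_Zp Mc)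
  also have "\<dots> = (\<Sum>\<sigma>\<in>?P. (sign \<sigma> * (\<Prod>i\<in>{0..<s}. M i (\<sigma> i) n)) mod p ^ n) mod p ^ n"
    by (simp only: mod_mult_eq)
  also have "\<dots> = (\<Sum>\<sigma>\<in>?P. sign \<sigma> * (\<Prod>i\<in>{0..<s}. M i (\<sigma> i) n)) mod p ^ n"
    by (rule mod_sum_eq)
  finally show ?thesis .
qed

lemma ring_det_closed:
  assumes M: "\<And>i j. i < s \<Longrightarrow> j < s \<Longrightarrow> M i j \<in> carrier (Zp p)"
  shows "ring_det (Zp p) s M \<in> carrier (Zp p)"
proof -
  have Mc: "\<sigma> permutes {0..<s} \<Longrightarrow> (\<lambda>i. M i (\<sigma> i)) \<in> {0..<s} \<rightarrow> carrier (Zp p)" for \<sigma>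
    using M permutes_in_image by fastforce
  show ?thesis unfolding ring_det_def using Mc
    by (intro Z.finsum_closed) (auto intro!: Z.finprod_closed)
qed

end


lemma inv_mod_prime:
  fixes p c :: int assumes "Factorial_Ring.prime p" "0 < c" "c < p"
  shows "\<exists>d::nat. (int d * c) mod p = 1"
proof -
  have "\<not> p dvd c" using assms zdvd_not_zless by blast
  hence "coprime p c" using prime_imp_coprime assms(1) by blast
  hence g: "gcd c p = 1" by (simp add: coprime_iff_gcd_eq_1 gcd.commute)
  obtain u v where uv: "u * c + v * p = 1" using bezout_int[of c p] g by auto
  have p1: "p > 1" using assms prime_gt_1_int by blast
  define d where "d = nat (u mod p)"
  have "int d = u mod p" using p1 by (simp add: d_def)
  hence "(int d * c) mod p = (u * c) mod p" by (simp add: mod_mult_left_eq)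
  also have "\<dots> = (1 - v * p) mod p" using uv by (metis add_diff_cancel_right')
  also have "\<dots> = 1" using p1 by (simp add: mod_diff_eq[symmetric])
  finally show ?thesis by blast
qed

lemma (in cring) ideal_by_closure:
  assumes "I \<subseteq> carrier R" "\<zero> \<in> I" "\<And>x y. x \<in> I \<Longrightarrow> y \<in> I \<Longrightarrow> x \<oplus> y \<in> I"
    "\<And>a x. a \<in> carrier R \<Longrightarrow> x \<in> I \<Longrightarrow> a \<otimes> x \<in> I"
  shows "ideal I R"
proof (rule idealI)
  show "ring R" by (rule ring_axioms)
  have neg: "\<ominus> a \<in> I" if a: "a \<in> I" for a
  proof -
    have "(\<ominus> \<one>) \<otimes> a = \<ominus> a" using a assms(1) by (simp add: l_minus subsetD)
    thus "\<ominus> a \<in> I" using assms(4)[of "\<ominus> \<one>" a] a by simp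
  qed
  show "subgroup I (add_monoid R)"
    by (rule add.subgroupI) (use assms(1,2,3) neg in auto)
next
  fix a x assume "a \<in> I" "x \<in> carrier R"
  thus "x \<otimes> a \<in> I" using assms(4) by blast
  thus "a \<otimes> x \<in> I" using \<open>a \<in> I\<close> \<open>x \<in> carrier R\<close> assms(1) m_comm by (simp add: subsetD)
qed

locale main = zp p for p +
  fixes R :: "('a, 'b) ring_scheme" (structure) and \<iota> :: "(nat \<Rightarrow> int) \<Rightarrow> 'a"
    and s :: nat and \<phi> :: "nat \<Rightarrow> 'a \<Rightarrow> (nat \<Rightarrow> int)"
  assumes pr: "Factorial_Ring.prime p" and loc: "local_ring R" and noeth: "noetherian_ring R"
    and iota: "\<iota> \<in> ring_hom (Zp p) R" and phi: "\<And>i. i < s \<Longrightarrow> \<phi> i \<in> ring_hom R (Zp p)"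
    and spos: "0 < s"
begin

sublocale cring R using loc by (simp add: local_ring_def)

lemma phic: "i < s \<Longrightarrow> ring_hom_cring R (Zp p) (\<phi> i)"
  using phi Zp_cring cring_axioms unfolding ring_hom_cring_def ring_hom_cring_axioms_def by blast

lemma phi_closed: "i < s \<Longrightarrow> x \<in> carrier R \<Longrightarrow> \<phi> i x \<in> carrier (Zp p)"
  by (rule ring_hom_closed[OF phi])
lemma phi_add: "i < s \<Longrightarrow> x \<in> carrier R \<Longrightarrow> y \<in> carrier R \<Longrightarrow> \<phi> i (x \<oplus> y) n = (\<phi> i x n + \<phi> i y n) mod p ^ n"
  by (subst ring_hom_add[OF phi]) (assumption+, rule add_Zp)
lemma phi_mult: "i < s \<Longrightarrow> x \<in> carrier R \<Longrightarrow> y \<in> carrier R \<Longrightarrow> \<phi> i (x \<otimes> y) n = (\<phi> i x n * \<phi> i y n) mod p ^ n"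
  by (subst ring_hom_mult[OF phi]) (assumption+, rule mult_Zp)
lemma phi_one: "i < s \<Longrightarrow> \<phi> i \<one> n = 1 mod p ^ n"
  by (subst ring_hom_one[OF phi]) (assumption, rule one_Zp)
lemma phi_zero: "i < s \<Longrightarrow> \<phi> i \<zero> n = 0"
  by (subst ring_hom_zero[OF phi _ Z.ring_axioms]) (assumption, rule ring_axioms, rule zero_Zp)
lemma phi_minus: assumes "i < s" "x \<in> carrier R" shows "\<phi> i (\<ominus> x) n = (- \<phi> i x n) mod p ^ n"
proof -
  have "\<phi> i (\<ominus> x) = \<ominus>\<^bsub>Zp p\<^esub> \<phi> i x" using ring_hom_cring.hom_a_inv[OF phic[OF assms(1)] assms(2)] .
  thus ?thesis using a_inv_Zp[OF phi_closed[OF assms]] by simp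
qed
lemma phi_nmul: assumes "i < s" shows "\<phi> i (nmul R c) = nmul (Zp p) c"
  by (rule nmul_hom[OF phi[OF assms] ring_axioms Z.ring_axioms])
lemma phi_bounds: "i < s \<Longrightarrow> x \<in> carrier R \<Longrightarrow> 0 \<le> \<phi> i x n \<and> \<phi> i x n < p ^ n"
  by (rule carr_bounds[OF phi_closed])
lemma phi_compat: "i < s \<Longrightarrow> x \<in> carrier R \<Longrightarrow> m \<le> n \<Longrightarrow> \<phi> i x n mod p ^ m = \<phi> i x m"
  by (rule carr_compat[OF phi_closed])

definition "Fs t = {x \<in> carrier R. \<forall>i<s. \<phi> i x t = 0}"
definition "Ji i = {x \<in> carrier R. \<phi> i x 1 = 0}"
definition "Sc = {a \<in> carrier R. \<forall>i<s. \<phi> i a = \<phi> 0 a}"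
definition "P = \<iota> (Zp_p p)"

lemma F_ideal: "ideal (Fs t) R"
  by (rule ideal_by_closure) (auto simp: Fs_def phi_zero phi_add phi_mult)

lemma Ji_ideal: "i < s \<Longrightarrow> ideal (Ji i) R"
  by (rule ideal_by_closure) (auto simp: Ji_def phi_zero phi_add phi_mult)

lemma comp_dvd: assumes "z \<in> carrier (Zp p)" "z a = 0" "a \<le> n" shows "p ^ a dvd z n"
  using carr_compat[OF assms(1) assms(3)] assms(2) by (simp add: dvd_eq_mod_eq_0)

lemma F_mult: assumes "x \<in> Fs a" "y \<in> Fs b" shows "x \<otimes> y \<in> Fs (a + b)"
proof -
  have "\<phi> i (x \<otimes> y) (a + b) = 0" if i: "i < s" for i
  proof -
    have "p ^ a dvd \<phi> i x (a + b)" using assms(1) i by (intro comp_dvd phi_closed) (auto simp: Fs_def)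
    moreover have "p ^ b dvd \<phi> i y (a + b)" using assms(2) i by (intro comp_dvd phi_closed) (auto simp: Fs_def)
    ultimately have "p ^ (a + b) dvd \<phi> i x (a + b) * \<phi> i y (a + b)" by (simp add: power_add mult_dvd_mono)
    thus ?thesis using assms i by (simp add: Fs_def phi_mult dvd_eq_mod_eq_0)
  qed
  thus ?thesis using assms by (auto simp: Fs_def)
qed

lemma F_mono: assumes "x \<in> Fs a" "b \<le> a" shows "x \<in> Fs b"
  using assms phi_compat[of _ x b a] by (auto simp: Fs_def)

lemma phi_0: "i < s \<Longrightarrow> x \<in> carrier R \<Longrightarrow> \<phi> i x 0 = 0"
  using phi_bounds[of i x 0] by simp

lemma F_0: "Fs 0 = carrier R"
  using phi_0 by (auto simp: Fs_def)

lemma inv_mod: assumes i: "i < s" and x: "x \<in> carrier R" and nz: "\<phi> i x 1 \<noteq> 0"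
  shows "\<exists>b \<in> carrier R. \<phi> i (b \<otimes> x) 1 = 1"
proof -
  have "0 < \<phi> i x 1" "\<phi> i x 1 < p" using phi_bounds[OF i x, of 1] nz by auto
  then obtain d where d: "(int d * \<phi> i x 1) mod p = 1" using inv_mod_prime[OF pr] by blast
  have "\<phi> i (nmul R d \<otimes> x) 1 = 1"
    using d i x by (simp add: phi_mult nmul_closed[OF ring_axioms] phi_nmul nmul_Zp mod_mult_left_eq)
  thus ?thesis using nmul_closed[OF ring_axioms] by blast
qed

lemma one_notin_Ji: "i < s \<Longrightarrow> \<one> \<notin> Ji i"
  using p2 by (simp add: Ji_def phi_one)

lemma Ji_max: assumes i: "i < s" shows "maximalideal (Ji i) R"
proof (rule maximalidealI)
  show "ideal (Ji i) R" using Ji_ideal[OF i] .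
  show "carrier R \<noteq> Ji i" using one_notin_Ji[OF i] by blast
  fix Y assume Y: "ideal Y R" "Ji i \<subseteq> Y" "Y \<subseteq> carrier R"
  show "Y = Ji i \<or> Y = carrier R"
  proof (cases "Y \<subseteq> Ji i")
    case True then show ?thesis using Y by blast
  next
    case False
    then obtain x where x: "x \<in> Y" "x \<notin> Ji i" by blast
    have xc: "x \<in> carrier R" using x Y by blast
    hence "\<phi> i x 1 \<noteq> 0" using x by (simp add: Ji_def)
    then obtain b where b: "b \<in> carrier R" "\<phi> i (b \<otimes> x) 1 = 1" using inv_mod[OF i xc] by blast
    have bx: "b \<otimes> x \<in> Y" using Y(1) x(1) b(1) by (simp add: ideal.I_l_closed)
    have bxc: "b \<otimes> x \<in> carrier R" using b xc by simp
    have "\<one> \<ominus> b \<otimes> x \<in> Ji i"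
      using i b bxc by (simp add: Ji_def minus_eq phi_add phi_minus phi_one mod_add_eq)
    hence "\<one> \<ominus> b \<otimes> x \<in> Y" using Y by blast
    hence "(\<one> \<ominus> b \<otimes> x) \<oplus> b \<otimes> x \<in> Y" using bx Y(1) by (simp add: ideal.axioms(1) additive_subgroup.a_closed)
    moreover have "(\<one> \<ominus> b \<otimes> x) \<oplus> b \<otimes> x = \<one>" using bxc by (simp add: minus_eq a_assoc l_neg)
    ultimately have "\<one> \<in> Y" by simp
    thus ?thesis using Y(1) ideal.one_imp_carrier by blast
  qed
qed

lemma Ji_eq: assumes "i < s" shows "Ji i = Ji 0"
  using loc Ji_max[OF assms] Ji_max[OF spos] unfolding local_ring_def by blast

lemma F1_eq: "Fs 1 = Ji 0"
proof
  show "Fs 1 \<subseteq> Ji 0" using spos by (auto simp: Fs_def Ji_def)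
  show "Ji 0 \<subseteq> Fs 1"
  proof
    fix x assume x: "x \<in> Ji 0"
    have "\<phi> i x 1 = 0" if "i < s" for i
    proof -
      have "x \<in> Ji i" using x Ji_eq[OF that] by blast
      thus ?thesis by (simp add: Ji_def)
    qed
    thus "x \<in> Fs 1" using x by (simp add: Fs_def Ji_def)
  qed
qed

lemma J_max: "maximalideal (Ji 0) R" using Ji_max[OF spos] .

lemma J_unique: "maximalideal M R \<Longrightarrow> M = Ji 0"
  using loc J_max unfolding local_ring_def by blast

lemma nmul_Sc: "nmul R c \<in> Sc"
  using phi_nmul spos by (simp add: Sc_def nmul_closed[OF ring_axioms])

lemma ScD: "a \<in> Sc \<Longrightarrow> i < s \<Longrightarrow> \<phi> i a = \<phi> 0 a"
  unfolding Sc_def by blast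

lemma Sc_carr: "Sc \<subseteq> carrier R" by (auto simp: Sc_def)

lemma Sc_add: assumes "a \<in> Sc" "b \<in> Sc" shows "a \<oplus> b \<in> Sc"
proof -
  have ab: "a \<in> carrier R" "b \<in> carrier R" using assms Sc_carr by auto
  have "\<phi> i (a \<oplus> b) = \<phi> 0 (a \<oplus> b)" if "i < s" for i
    using ring_hom_add[OF phi[OF that] ab] ring_hom_add[OF phi[OF spos] ab] ScD[OF assms(1) that] ScD[OF assms(2) that]
    by simp
  thus ?thesis using ab unfolding Sc_def by blast
qed

lemma Sc_mult: assumes "a \<in> Sc" "b \<in> Sc" shows "a \<otimes> b \<in> Sc"
proof -
  have ab: "a \<in> carrier R" "b \<in> carrier R" using assms Sc_carr by auto
  have "\<phi> i (a \<otimes> b) = \<phi> 0 (a \<otimes> b)" if "i < s" for i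
    using ring_hom_mult[OF phi[OF that] ab] ring_hom_mult[OF phi[OF spos] ab] ScD[OF assms(1) that] ScD[OF assms(2) that]
    by simp
  thus ?thesis using ab unfolding Sc_def by blast
qed

lemma Sc_one: "\<one> \<in> Sc"
  using ring_hom_one[OF phi] spos unfolding Sc_def by auto

lemma residue: assumes x: "x \<in> carrier R" shows "\<exists>a\<in>Sc. x \<ominus> a \<in> Ji 0"
proof -
  define a where "a = nmul R (nat (\<phi> 0 x 1))"
  have ac: "a \<in> carrier R" by (simp add: a_def nmul_closed[OF ring_axioms])
  have b: "0 \<le> \<phi> 0 x 1" "\<phi> 0 x 1 < p" using phi_bounds[OF spos x, of 1] by auto
  have "\<phi> 0 a 1 = \<phi> 0 x 1" using b by (simp add: a_def phi_nmul[OF spos] nmul_Zp)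
  hence "\<phi> 0 (x \<ominus> a) 1 = 0" using x ac spos by (simp add: minus_eq phi_add phi_minus mod_add_right_eq)
  hence "x \<ominus> a \<in> Ji 0" using x ac by (simp add: Ji_def)
  moreover have "a \<in> Sc" using nmul_Sc a_def by simp
  ultimately show ?thesis by blast
qed

lemma inv_J: assumes x: "x \<in> carrier R" "x \<notin> Ji 0" shows "\<exists>b\<in>carrier R. b \<otimes> x \<ominus> \<one> \<in> Ji 0"
proof -
  have "\<phi> 0 x 1 \<noteq> 0" using x by (simp add: Ji_def)
  then obtain b where b: "b \<in> carrier R" "\<phi> 0 (b \<otimes> x) 1 = 1" using inv_mod[OF spos x(1)] by blast
  have one: "1 mod p = 1" using p2 by simp
  have "b \<otimes> x \<ominus> \<one> \<in> Ji 0" using b x spos one by (simp add: Ji_def minus_eq phi_add phi_minus phi_one mod_add_right_eq)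
  thus ?thesis using b by blast
qed

lemma P_closed: "P \<in> carrier R"
  unfolding P_def by (rule ring_hom_closed[OF iota Zp_p_closed])

lemma phi_P: assumes "i < s" shows "\<phi> i P = Zp_p p"
proof -
  have "\<iota> (nmul (Zp p) (nat p)) = nmul R (nat p)" using nmul_hom[OF iota Z.ring_axioms ring_axioms] .
  thus ?thesis unfolding P_def using Zp_p_nmul phi_nmul[OF assms] by simp
qed

lemma P_Sc: "P \<in> Sc"
proof -
  have "\<phi> i P = \<phi> 0 P" if "i < s" for i using phi_P[OF that] phi_P[OF spos] by simp
  thus ?thesis using P_closed unfolding Sc_def by blast
qed

lemma P_F1: "P \<in> Fs 1" using phi_P P_closed by (simp add: Fs_def Zp_p_def)

lemma Ppow_F: "P [^] (t::nat) \<in> Fs t"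
proof (induction t)
  case 0 then show ?case using F_0 by simp
next
  case (Suc t) then show ?case using F_mult[OF Suc P_F1] by simp
qed

lemma Ppow_Sc: "P [^] (t::nat) \<in> Sc"
proof (induction t)
  case 0 then show ?case using Sc_one by simp
next
  case (Suc t) then show ?case using Sc_mult[OF Suc P_Sc] by simp
qed

end


lemma (in ring) eq_iff_minus_zero: assumes "a \<in> carrier R" "b \<in> carrier R"
  shows "a = b \<longleftrightarrow> a \<ominus> b = \<zero>"
proof
  assume "a = b" thus "a \<ominus> b = \<zero>" using assms by (simp add: minus_eq r_neg)
next
  assume h: "a \<ominus> b = \<zero>"
  have "a = (a \<ominus> b) \<oplus> b" using assms by (simp add: minus_eq a_assoc l_neg)
  thus "a = b" using h assms by simp
qed

context main begin

definition "I = PIdl P"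
definition "A = R Quot I"
definition "pr x = I +> x"
definition "W = pr ` Ji 0"
definition "N k = ideal_power A W k"

lemma pr_eq: "pr = (+>) I"
  by (rule ext) (simp add: pr_def)

lemma I_ideal: "ideal I R"
  unfolding I_def by (rule cgenideal_ideal[OF P_closed])

lemma J_ideal: "ideal (Ji 0) R"
  by (rule Ji_ideal[OF spos])

lemma P_J: "P \<in> Ji 0"
  using P_F1 F1_eq by simp

lemma I_sub_J: "I \<subseteq> Ji 0"
proof
  fix x assume "x \<in> I"
  then obtain y where "y \<in> carrier R" "x = y \<otimes> P" unfolding I_def cgenideal_def by blast
  thus "x \<in> Ji 0" using ideal.I_l_closed[OF J_ideal P_J] by simp
qed

lemma A_cring: "cring A"
  unfolding A_def by (rule ideal.quotient_is_cring[OF I_ideal cring_axioms])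

lemma pr_hc: "ring_hom_cring R A pr"
  unfolding A_def pr_eq by (rule ideal.rcos_ring_hom_cring[OF I_ideal cring_axioms])

lemma pr_hom: "pr \<in> ring_hom R A"
  using pr_hc ring_hom_cring.homh by blast

lemma pr_hr: "ring_hom_ring R A pr"
  unfolding A_def pr_eq by (rule ideal.rcos_ring_hom_ring[OF I_ideal])

sublocale Aq: cring A by (rule A_cring)

lemma A_carr: "carrier A = pr ` carrier R"
  unfolding A_def FactRing_def A_RCOSETS_def' pr_def by auto

lemma pr_closed: "x \<in> carrier R \<Longrightarrow> pr x \<in> carrier A"
  using A_carr by blast

lemma A_zero: "\<zero>\<^bsub>A\<^esub> = I"
  unfolding A_def FactRing_def by simp

lemma pr_add: "x \<in> carrier R \<Longrightarrow> y \<in> carrier R \<Longrightarrow> pr (x \<oplus> y) = pr x \<oplus>\<^bsub>A\<^esub> pr y"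
  using ring_hom_add[OF pr_hom] by blast
lemma pr_mult: "x \<in> carrier R \<Longrightarrow> y \<in> carrier R \<Longrightarrow> pr (x \<otimes> y) = pr x \<otimes>\<^bsub>A\<^esub> pr y"
  using ring_hom_mult[OF pr_hom] by blast
lemma pr_one: "pr \<one> = \<one>\<^bsub>A\<^esub>"
  using ring_hom_one[OF pr_hom] by blast
lemma pr_zero: "pr \<zero> = \<zero>\<^bsub>A\<^esub>"
  using ring_hom_cring.hom_zero[OF pr_hc] by blast
lemma pr_minus: "x \<in> carrier R \<Longrightarrow> pr (\<ominus> x) = \<ominus>\<^bsub>A\<^esub> pr x"
  using ring_hom_cring.hom_a_inv[OF pr_hc] by blast
lemma pr_sub: "x \<in> carrier R \<Longrightarrow> y \<in> carrier R \<Longrightarrow> pr (x \<ominus> y) = pr x \<ominus>\<^bsub>A\<^esub> pr y"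
  by (simp add: minus_eq Aq.minus_eq pr_add pr_minus)

lemma pr_kernel: assumes x: "x \<in> carrier R" shows "pr x = \<zero>\<^bsub>A\<^esub> \<longleftrightarrow> x \<in> I"
proof
  assume "pr x = \<zero>\<^bsub>A\<^esub>"
  hence "I +> x = I" unfolding pr_def A_zero .
  thus "x \<in> I" by (rule ideal.rcos_const_imp_mem[OF I_ideal x])
next
  assume xi: "x \<in> I"
  have "I +> x = I" by (rule a_rcos_zero[OF I_ideal xi])
  thus "pr x = \<zero>\<^bsub>A\<^esub>" unfolding pr_def A_zero .
qed

lemma pr_eq_iff: assumes x: "x \<in> carrier R" and y: "y \<in> carrier R"
  shows "pr x = pr y \<longleftrightarrow> x \<ominus> y \<in> I"
proof -
  have "pr x = pr y \<longleftrightarrow> pr x \<ominus>\<^bsub>A\<^esub> pr y = \<zero>\<^bsub>A\<^esub>"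
    by (rule Aq.eq_iff_minus_zero[OF pr_closed[OF x] pr_closed[OF y]])
  also have "\<dots> \<longleftrightarrow> pr (x \<ominus> y) = \<zero>\<^bsub>A\<^esub>" by (simp only: pr_sub[OF x y])
  also have "\<dots> \<longleftrightarrow> x \<ominus> y \<in> I" by (rule pr_kernel) (simp add: x y)
  finally show ?thesis .
qed

lemma quot_ideal: "ideal Y R \<Longrightarrow> ideal (pr ` Y) A"
  unfolding A_def pr_eq by (rule ring_ideal_imp_quot_ideal[OF I_ideal])

lemma vimage_ideal: "ideal Y A \<Longrightarrow> ideal {x \<in> carrier R. pr x \<in> Y} R"
  by (rule ring_hom_ring.ideal_vimage[OF pr_hr])

lemma W_ideal: "ideal W A"
  unfolding W_def by (rule quot_ideal[OF J_ideal])

lemma pr_in_image: assumes Y: "ideal Y R" "I \<subseteq> Y" and x: "x \<in> carrier R"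
  shows "pr x \<in> pr ` Y \<longleftrightarrow> x \<in> Y"
proof
  assume "pr x \<in> pr ` Y"
  then obtain y where y: "y \<in> Y" "pr x = pr y" by (rule imageE)
  have yc: "y \<in> carrier R" by (rule ideal.Icarr[OF Y(1) y(1)])
  have xy: "x \<ominus> y \<in> I" using pr_eq_iff[OF x yc] y(2) by simp
  have xyY: "x \<ominus> y \<in> Y" using Y(2) xy by (rule subsetD)
  have s: "(x \<ominus> y) \<oplus> y \<in> Y" by (rule additive_subgroup.a_closed[OF ideal.axioms(1)[OF Y(1)] xyY y(1)])
  have "(x \<ominus> y) \<oplus> y = x" using x yc by (simp add: minus_eq a_assoc l_neg)
  thus "x \<in> Y" using s by simp
next
  assume "x \<in> Y" thus "pr x \<in> pr ` Y" by (rule imageI)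
qed

lemma W_iff: "x \<in> carrier R \<Longrightarrow> pr x \<in> W \<longleftrightarrow> x \<in> Ji 0"
  unfolding W_def by (rule pr_in_image[OF J_ideal I_sub_J])

lemma one_notin_W: "\<one>\<^bsub>A\<^esub> \<notin> W"
proof
  assume "\<one>\<^bsub>A\<^esub> \<in> W"
  hence "pr \<one> \<in> W" by (simp only: pr_one)
  hence "\<one> \<in> Ji 0" using W_iff[OF one_closed] by blast
  thus False using one_notin_Ji[OF spos] by (rule notE[rotated])
qed

lemma A_elem: assumes "X \<in> carrier A" obtains x where "x \<in> carrier R" "X = pr x"
  using assms unfolding A_carr by (rule imageE)

lemma W_max: "maximalideal W A"
proof (rule maximalidealI)
  show "ideal W A" by (rule W_ideal)
  show "carrier A \<noteq> W" using one_notin_W Aq.one_closed by metis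
  fix Y assume Y: "ideal Y A" "W \<subseteq> Y" "Y \<subseteq> carrier A"
  let ?V = "{x \<in> carrier R. pr x \<in> Y}"
  have V: "ideal ?V R" by (rule vimage_ideal[OF Y(1)])
  have JV: "Ji 0 \<subseteq> ?V"
  proof
    fix x assume x: "x \<in> Ji 0"
    have xc: "x \<in> carrier R" by (rule ideal.Icarr[OF J_ideal x])
    have "pr x \<in> W" unfolding W_def using x by (rule imageI)
    hence "pr x \<in> Y" using Y(2) by blast
    thus "x \<in> ?V" using xc by simp
  qed
  have "?V = Ji 0 \<or> ?V = carrier R"
    using maximalideal.I_maximal[OF J_max V JV] by simp
  thus "Y = W \<or> Y = carrier A"
  proof
    assume VJ: "?V = Ji 0"
    have "Y \<subseteq> W"
    proof
      fix X assume X: "X \<in> Y"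
      hence "X \<in> carrier A" using Y(3) by blast
      then obtain x where x: "x \<in> carrier R" "X = pr x" by (rule A_elem)
      hence "x \<in> ?V" using X by simp
      hence "x \<in> Ji 0" using VJ by simp
      thus "X \<in> W" unfolding W_def x(2) by (rule imageI)
    qed
    thus ?thesis using Y(2) by blast
  next
    assume VC: "?V = carrier R"
    have "carrier A \<subseteq> Y"
    proof
      fix X assume "X \<in> carrier A"
      then obtain x where x: "x \<in> carrier R" "X = pr x" by (rule A_elem)
      hence "x \<in> ?V" using VC by simp
      thus "X \<in> Y" using x(2) by simp
    qed
    thus ?thesis using Y(3) by blast
  qed
qed

lemma W_unique: assumes M: "maximalideal M A" shows "M = W"
proof -
  let ?Q = "{x \<in> carrier R. pr x \<in> M}"
  have Mi: "ideal M A" using M maximalideal.axioms(1) by blast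
  have Q: "ideal ?Q R" by (rule vimage_ideal[OF Mi])
  have IQ: "I \<subseteq> ?Q"
  proof
    fix x assume x: "x \<in> I"
    hence xc: "x \<in> carrier R" by (rule ideal.Icarr[OF I_ideal])
    have "pr x = \<zero>\<^bsub>A\<^esub>" using pr_kernel[OF xc] x by simp
    moreover have "\<zero>\<^bsub>A\<^esub> \<in> M" by (rule additive_subgroup.zero_closed[OF ideal.axioms(1)[OF Mi]])
    ultimately show "x \<in> ?Q" using xc by simp
  qed
  have one_notin_M: "\<one>\<^bsub>A\<^esub> \<notin> M"
  proof
    assume "\<one>\<^bsub>A\<^esub> \<in> M"
    hence "M = carrier A" by (rule ideal.one_imp_carrier[OF Mi])
    thus False using maximalideal.I_notcarr[OF M] by simp
  qed
  have "maximalideal ?Q R"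
  proof (rule maximalidealI)
    show "ideal ?Q R" by (rule Q)
    show "carrier R \<noteq> ?Q"
    proof
      assume "carrier R = ?Q"
      hence "pr \<one> \<in> M" using one_closed by blast
      thus False using one_notin_M by (simp add: pr_one)
    qed
    fix Y assume Y: "ideal Y R" "?Q \<subseteq> Y" "Y \<subseteq> carrier R"
    have Y': "ideal (pr ` Y) A" by (rule quot_ideal[OF Y(1)])
    have MY: "M \<subseteq> pr ` Y"
    proof
      fix X assume X: "X \<in> M"
      hence "X \<in> carrier A" by (rule ideal.Icarr[OF Mi])
      then obtain x where x: "x \<in> carrier R" "X = pr x" by (rule A_elem)
      hence "x \<in> ?Q" using X by simp
      hence "x \<in> Y" using Y(2) by blast
      thus "X \<in> pr ` Y" unfolding x(2) by (rule imageI)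
    qed
    have MYc: "pr ` Y \<subseteq> carrier A"
    proof
      fix X assume "X \<in> pr ` Y"
      then obtain y where "y \<in> Y" "X = pr y" by (rule imageE)
      thus "X \<in> carrier A" using Y(3) pr_closed by blast
    qed
    have "pr ` Y = M \<or> pr ` Y = carrier A"
      using maximalideal.I_maximal[OF M Y' MY MYc] by simp
    thus "Y = ?Q \<or> Y = carrier R"
    proof
      assume YM: "pr ` Y = M"
      have "Y \<subseteq> ?Q"
      proof
        fix y assume y: "y \<in> Y"
        hence "pr y \<in> M" using YM by blast
        thus "y \<in> ?Q" using y Y(3) by blast
      qed
      thus ?thesis using Y(2) by blast
    next
      assume "pr ` Y = carrier A"
      hence "pr \<one> \<in> pr ` Y" using pr_closed[OF one_closed] by simp
      moreover have IY: "I \<subseteq> Y" using IQ Y(2) by (rule subset_trans)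
      ultimately have "\<one> \<in> Y" using pr_in_image[OF Y(1) IY one_closed] by simp
      hence "Y = carrier R" by (rule ideal.one_imp_carrier[OF Y(1)])
      thus ?thesis by simp
    qed
  qed
  hence QJ: "?Q = Ji 0" by (rule J_unique)
  show "M = W"
  proof
    show "M \<subseteq> W"
    proof
      fix X assume X: "X \<in> M"
      hence "X \<in> carrier A" by (rule ideal.Icarr[OF Mi])
      then obtain x where x: "x \<in> carrier R" "X = pr x" by (rule A_elem)
      hence "x \<in> ?Q" using X by simp
      hence "x \<in> Ji 0" using QJ by simp
      thus "X \<in> W" unfolding W_def x(2) by (rule imageI)
    qed
    show "W \<subseteq> M"
    proof
      fix X assume "X \<in> W"
      then obtain x where x: "x \<in> Ji 0" "X = pr x" unfolding W_def by (rule imageE)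
      hence "x \<in> ?Q" using QJ by simp
      thus "X \<in> M" using x(2) by simp
    qed
  qed
qed

lemma maxA: "max_ideal A = W"
  unfolding max_ideal_def by (rule the_equality[where P="\<lambda>M. maximalideal M A", OF W_max W_unique])

lemma N_0: "N 0 = carrier A"
  unfolding N_def ideal_power_def by (simp add: ideals_set_def)

lemma N_Suc: "N (Suc k) = ideal_prod A (N k) W"
proof -
  interpret IS: comm_monoid "ideals_set A" by (rule Aq.ideals_set_is_comm_monoid)
  have "W [^]\<^bsub>ideals_set A\<^esub> Suc k = W [^]\<^bsub>ideals_set A\<^esub> k \<otimes>\<^bsub>ideals_set A\<^esub> W"
    by (rule IS.nat_pow_Suc)
  thus ?thesis unfolding N_def ideal_power_def by (simp add: ideals_set_def)
qed

lemma N_ideal: "ideal (N k) A"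
proof (induction k)
  case 0 then show ?case using N_0 Aq.oneideal by simp
next
  case (Suc k) then show ?case using N_Suc Aq.ideal_prod_is_ideal W_ideal by simp
qed

lemma N_carr: "N k \<subseteq> carrier A"
  by (rule additive_subgroup.a_subset[OF ideal.axioms(1)[OF N_ideal]])

lemma N_mult: assumes "X \<in> N k" "w \<in> W" shows "X \<otimes>\<^bsub>A\<^esub> w \<in> N (Suc k)"
  unfolding N_Suc by (rule ideal_prod.prod[OF assms])

lemma N_mult': assumes "X \<in> N k" "w \<in> W" shows "w \<otimes>\<^bsub>A\<^esub> X \<in> N (Suc k)"
proof -
  have "X \<in> carrier A" using assms(1) N_carr by blast
  moreover have "w \<in> carrier A" using assms(2) ideal.Icarr[OF W_ideal] by blast
  ultimately have "X \<otimes>\<^bsub>A\<^esub> w = w \<otimes>\<^bsub>A\<^esub> X" by (rule Aq.m_comm)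
  thus ?thesis using N_mult[OF assms] by simp
qed

lemma N_sub: "N k \<subseteq> pr ` Fs k"
proof (induction k)
  case 0 then show ?case using N_0 A_carr F_0 by simp
next
  case (Suc k)
  have T: "ideal (pr ` Fs (Suc k)) A" by (rule quot_ideal[OF F_ideal])
  show ?case unfolding N_Suc
  proof
    fix X assume "X \<in> ideal_prod A (N k) W"
    thus "X \<in> pr ` Fs (Suc k)"
    proof (induction X rule: ideal_prod.induct)
      case (prod i j)
      obtain y where y: "y \<in> Fs k" "i = pr y" using prod(1) Suc by blast
      obtain z where z: "z \<in> Ji 0" "j = pr z" using prod(2) W_def by blast
      have yc: "y \<in> carrier R" using y(1) by (simp add: Fs_def)
      have zc: "z \<in> carrier R" using z(1) by (simp add: Ji_def)
      have "y \<otimes> z \<in> Fs (Suc k)" using F_mult[OF y(1), of z 1] z(1) F1_eq by simp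
      moreover have "i \<otimes>\<^bsub>A\<^esub> j = pr (y \<otimes> z)" using y z pr_mult yc zc by simp
      ultimately show ?case by blast
    next
      case (sum s1 s2)
      thus ?case using T by (simp add: ideal.axioms(1) additive_subgroup.a_closed)
    qed
  qed
qed

end


context cring begin

lemma lin_closed: assumes "S \<subseteq> carrier R" "a \<in> S \<rightarrow> carrier R"
  shows "(\<Oplus>s\<in>S. a s \<otimes> s) \<in> carrier R"
proof (rule finsum_closed, rule Pi_I)
  fix x assume "x \<in> S"
  thus "a x \<otimes> x \<in> carrier R" using assms by (intro m_closed) (auto simp: Pi_iff)
qed

lemma lin_fun: assumes "S \<subseteq> carrier R" "a \<in> S \<rightarrow> carrier R"
  shows "(\<lambda>s. a s \<otimes> s) \<in> S \<rightarrow> carrier R"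
proof (rule Pi_I)
  fix x assume "x \<in> S"
  thus "a x \<otimes> x \<in> carrier R" using assms by (intro m_closed) (auto simp: Pi_iff)
qed

lemma lin_add: assumes "S \<subseteq> carrier R" "a \<in> S \<rightarrow> carrier R" "b \<in> S \<rightarrow> carrier R"
  shows "(\<Oplus>s\<in>S. a s \<otimes> s) \<oplus> (\<Oplus>s\<in>S. b s \<otimes> s) = (\<Oplus>s\<in>S. (a s \<oplus> b s) \<otimes> s)"
proof -
  have "(\<Oplus>s\<in>S. (a s \<oplus> b s) \<otimes> s) = (\<Oplus>s\<in>S. a s \<otimes> s \<oplus> b s \<otimes> s)"
  proof (rule finsum_cong')
    show "(\<lambda>s. a s \<otimes> s \<oplus> b s \<otimes> s) \<in> S \<rightarrow> carrier R"
      using lin_fun[OF assms(1,2)] lin_fun[OF assms(1,3)] by (auto simp: Pi_iff)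
    fix s assume "s \<in> S"
    thus "(a s \<oplus> b s) \<otimes> s = a s \<otimes> s \<oplus> b s \<otimes> s" using assms by (intro l_distr) (auto simp: Pi_iff)
  qed simp
  also have "\<dots> = (\<Oplus>s\<in>S. a s \<otimes> s) \<oplus> (\<Oplus>s\<in>S. b s \<otimes> s)"
    by (rule finsum_addf[OF lin_fun[OF assms(1,2)] lin_fun[OF assms(1,3)]])
  finally show ?thesis by simp
qed

lemma lin_smult: assumes "finite S" "S \<subseteq> carrier R" "a \<in> S \<rightarrow> carrier R" "c \<in> carrier R"
  shows "c \<otimes> (\<Oplus>s\<in>S. a s \<otimes> s) = (\<Oplus>s\<in>S. (c \<otimes> a s) \<otimes> s)"
proof -
  have "c \<otimes> (\<Oplus>s\<in>S. a s \<otimes> s) = (\<Oplus>s\<in>S. c \<otimes> (a s \<otimes> s))"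
    by (rule finsum_rdistr[OF assms(1,4) lin_fun[OF assms(2,3)]])
  also have "\<dots> = (\<Oplus>s\<in>S. (c \<otimes> a s) \<otimes> s)"
  proof (rule finsum_cong')
    show "(\<lambda>s. (c \<otimes> a s) \<otimes> s) \<in> S \<rightarrow> carrier R"
      using assms by (auto simp: Pi_iff)
    fix s assume "s \<in> S"
    thus "c \<otimes> (a s \<otimes> s) = (c \<otimes> a s) \<otimes> s" using assms by (intro m_assoc[symmetric]) (auto simp: Pi_iff)
  qed simp
  finally show ?thesis .
qed

lemma lin_split: assumes "finite S" "S \<subseteq> carrier R" "a \<in> S \<rightarrow> carrier R" "s0 \<in> S"
  shows "(\<Oplus>s\<in>S. a s \<otimes> s) = a s0 \<otimes> s0 \<oplus> (\<Oplus>s\<in>S - {s0}. a s \<otimes> s)"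
proof -
  have S: "S = insert s0 (S - {s0})" using assms(4) by blast
  have f: "(\<lambda>s. a s \<otimes> s) \<in> S - {s0} \<rightarrow> carrier R" using lin_fun[OF assms(2,3)] by (auto simp: Pi_iff)
  have "(\<Oplus>s\<in>insert s0 (S - {s0}). a s \<otimes> s) = a s0 \<otimes> s0 \<oplus> (\<Oplus>s\<in>S - {s0}. a s \<otimes> s)"
    using assms by (intro finsum_insert f) (auto simp: Pi_iff)
  thus ?thesis using S by simp
qed

lemma lin_zero: assumes "S \<subseteq> carrier R" shows "(\<Oplus>s\<in>S. \<zero> \<otimes> s) = \<zero>"
proof -
  have "(\<Oplus>s\<in>S. \<zero> \<otimes> s) = (\<Oplus>s\<in>S. \<zero>)"
    by (rule finsum_cong') (use assms in auto)
  thus ?thesis by simp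
qed

lemma lin_delta: assumes "finite S" "S \<subseteq> carrier R" "t \<in> S"
  shows "(\<Oplus>s\<in>S. (if s = t then \<one> else \<zero>) \<otimes> s) = t"
proof -
  have "(\<Oplus>s\<in>S. (if s = t then \<one> else \<zero>) \<otimes> s) = (\<Oplus>s\<in>S. (if t = s then s else \<zero>))"
    by (rule finsum_cong') (use assms in auto)
  also have "\<dots> = t" using finsum_singleton[OF assms(3,1), of "\<lambda>s. s"] assms by auto
  finally show ?thesis .
qed

lemma span_ideal: assumes "finite T" "T \<subseteq> carrier R"
  shows "ideal {x. \<exists>a\<in>T \<rightarrow> carrier R. x = (\<Oplus>t\<in>T. a t \<otimes> t)} R"
    (is "ideal ?Sp R")
proof (rule ideal_by_closure)
  show "?Sp \<subseteq> carrier R" using lin_closed[OF assms(2)] by blast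
  have "\<zero> = (\<Oplus>t\<in>T. (\<lambda>_. \<zero>) t \<otimes> t)" using lin_zero[OF assms(2)] by simp
  thus "\<zero> \<in> ?Sp" unfolding mem_Collect_eq by (rule bexI[where x="\<lambda>_. \<zero>"]) simp
next
  fix x y assume "x \<in> ?Sp" "y \<in> ?Sp"
  then obtain a b where a: "a \<in> T \<rightarrow> carrier R" "x = (\<Oplus>t\<in>T. a t \<otimes> t)"
    and b: "b \<in> T \<rightarrow> carrier R" "y = (\<Oplus>t\<in>T. b t \<otimes> t)" by blast
  have "x \<oplus> y = (\<Oplus>t\<in>T. (a t \<oplus> b t) \<otimes> t)" using lin_add[OF assms(2) a(1) b(1)] a b by simp
  moreover have "(\<lambda>t. a t \<oplus> b t) \<in> T \<rightarrow> carrier R" using a(1) b(1) by (auto simp: Pi_iff)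
  ultimately show "x \<oplus> y \<in> ?Sp" unfolding mem_Collect_eq by (intro bexI[where x="\<lambda>t. a t \<oplus> b t"])
next
  fix c x assume c: "c \<in> carrier R" and "x \<in> ?Sp"
  then obtain a where a: "a \<in> T \<rightarrow> carrier R" "x = (\<Oplus>t\<in>T. a t \<otimes> t)" by blast
  have "c \<otimes> x = (\<Oplus>t\<in>T. (c \<otimes> a t) \<otimes> t)" using lin_smult[OF assms a(1) c] a by simp
  moreover have "(\<lambda>t. c \<otimes> a t) \<in> T \<rightarrow> carrier R" using a(1) c by (auto simp: Pi_iff)
  ultimately show "c \<otimes> x \<in> ?Sp" unfolding mem_Collect_eq by (intro bexI[where x="\<lambda>t. c \<otimes> a t"])
qed

lemma span_contains: assumes "finite T" "T \<subseteq> carrier R"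
  shows "T \<subseteq> {x. \<exists>a\<in>T \<rightarrow> carrier R. x = (\<Oplus>t\<in>T. a t \<otimes> t)}"
proof
  fix t assume t: "t \<in> T"
  have "t = (\<Oplus>s\<in>T. (\<lambda>s. if s = t then \<one> else \<zero>) s \<otimes> s)" using lin_delta[OF assms t] by simp
  thus "t \<in> {x. \<exists>a\<in>T \<rightarrow> carrier R. x = (\<Oplus>t\<in>T. a t \<otimes> t)}"
    unfolding mem_Collect_eq by (rule bexI[where x="\<lambda>s. if s = t then \<one> else \<zero>"]) simp
qed

lemma drop_elem:
  assumes N1: "ideal N1 R" and fS: "finite S" and Sc: "S \<subseteq> carrier R" and s0: "s0 \<in> S"
    and a: "a \<in> S \<rightarrow> carrier R" and la: "(\<Oplus>s\<in>S. a s \<otimes> s) \<in> N1"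
    and b: "b \<in> carrier R" and bs: "(b \<otimes> a s0 \<ominus> \<one>) \<otimes> s0 \<in> N1"
    and X: "X \<in> carrier R" and c: "c \<in> S \<rightarrow> carrier R" and lc: "X \<ominus> (\<Oplus>s\<in>S. c s \<otimes> s) \<in> N1"
  shows "\<exists>c'\<in>(S - {s0}) \<rightarrow> carrier R. X \<ominus> (\<Oplus>s\<in>S - {s0}. c' s \<otimes> s) \<in> N1"
proof -
  let ?S' = "S - {s0}"
  have fS': "finite ?S'" using fS by simp
  have Sc': "?S' \<subseteq> carrier R" using Sc by blast
  have a': "a \<in> ?S' \<rightarrow> carrier R" and c': "c \<in> ?S' \<rightarrow> carrier R" using a c by (auto simp: Pi_iff)
  have s0c: "s0 \<in> carrier R" using Sc s0 by blast
  have as0: "a s0 \<in> carrier R" and cs0: "c s0 \<in> carrier R" using a c s0 by (auto simp: Pi_iff)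
  define La where "La = (\<Oplus>s\<in>?S'. a s \<otimes> s)"
  define Lc where "Lc = (\<Oplus>s\<in>?S'. c s \<otimes> s)"
  have La: "La \<in> carrier R" unfolding La_def by (rule lin_closed[OF Sc' a'])
  have Lc: "Lc \<in> carrier R" unfolding Lc_def by (rule lin_closed[OF Sc' c'])
  define e where "e = \<ominus> (c s0 \<otimes> b)"
  have ec: "e \<in> carrier R" using cs0 b by (simp add: e_def)
  define d where "d = (\<lambda>s. c s \<oplus> e \<otimes> a s)"
  have d: "d \<in> ?S' \<rightarrow> carrier R" using a' c' ec by (auto simp: Pi_iff d_def)
  have ea: "(\<lambda>s. e \<otimes> a s) \<in> ?S' \<rightarrow> carrier R" using a' ec by (auto simp: Pi_iff)
  have Ld: "(\<Oplus>s\<in>?S'. d s \<otimes> s) = Lc \<oplus> e \<otimes> La"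
    unfolding d_def Lc_def La_def
    using lin_add[OF Sc' c' ea] lin_smult[OF fS' Sc' a' ec] by simp
  have sa: "(\<Oplus>s\<in>S. a s \<otimes> s) = a s0 \<otimes> s0 \<oplus> La" unfolding La_def by (rule lin_split[OF fS Sc a s0])
  have sc: "(\<Oplus>s\<in>S. c s \<otimes> s) = c s0 \<otimes> s0 \<oplus> Lc" unfolding Lc_def by (rule lin_split[OF fS Sc c s0])
  define u1 where "u1 = X \<ominus> (c s0 \<otimes> s0 \<oplus> Lc)"
  define u2 where "u2 = a s0 \<otimes> s0 \<oplus> La"
  define u3 where "u3 = (b \<otimes> a s0 \<ominus> \<one>) \<otimes> s0"
  have u1: "u1 \<in> N1" using lc sc by (simp add: u1_def)
  have u2: "u2 \<in> N1" using la sa by (simp add: u2_def)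
  have u3: "u3 \<in> N1" using bs by (simp add: u3_def)
  have iden: "X \<ominus> (Lc \<oplus> e \<otimes> La) = u1 \<oplus> c s0 \<otimes> (b \<otimes> u2 \<ominus> u3)"
    unfolding u1_def u2_def u3_def e_def using X Lc La cs0 b as0 s0c by algebra
  have "u1 \<oplus> c s0 \<otimes> (b \<otimes> u2 \<ominus> u3) \<in> N1"
  proof -
    interpret N: ideal N1 R by (rule N1)
    have "b \<otimes> u2 \<in> N1" using u2 b by (rule N.I_l_closed)
    hence "b \<otimes> u2 \<ominus> u3 \<in> N1" using u3 by (simp add: minus_eq N.a_closed N.a_inv_closed)
    hence "c s0 \<otimes> (b \<otimes> u2 \<ominus> u3) \<in> N1" using cs0 by (rule N.I_l_closed)
    thus ?thesis using u1 by (simp add: N.a_closed)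
  qed
  hence "X \<ominus> (\<Oplus>s\<in>?S'. d s \<otimes> s) \<in> N1" using iden Ld by simp
  thus ?thesis using d by blast
qed

end



context main begin

lemma N_span: "\<exists>T0. finite T0 \<and> T0 \<subseteq> N k \<and> (\<forall>X\<in>N k. \<exists>a\<in>T0 \<rightarrow> carrier A. X = (\<Oplus>\<^bsub>A\<^esub> t\<in>T0. a t \<otimes>\<^bsub>A\<^esub> t))"
proof -
  let ?G = "{x \<in> carrier R. pr x \<in> N k}"
  have G: "ideal ?G R" by (rule vimage_ideal[OF N_ideal])
  obtain B where B: "B \<subseteq> carrier R" "finite B" "?G = Idl B"
    using noetherian_ring.finetely_gen[OF noeth G] by blast
  define T0 where "T0 = pr ` B"
  have fT: "finite T0" using B(2) unfolding T0_def by (rule finite_imageI)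
  have BG: "B \<subseteq> ?G" unfolding B(3) by (rule genideal_self[OF B(1)])
  have TN: "T0 \<subseteq> N k" using BG unfolding T0_def by blast
  have TA: "T0 \<subseteq> carrier A" using TN N_carr by (rule subset_trans)
  let ?Sp = "{x. \<exists>a\<in>T0 \<rightarrow> carrier A. x = (\<Oplus>\<^bsub>A\<^esub> t\<in>T0. a t \<otimes>\<^bsub>A\<^esub> t)}"
  have Sp: "ideal ?Sp A" by (rule Aq.span_ideal[OF fT TA])
  have TS: "T0 \<subseteq> ?Sp" by (rule Aq.span_contains[OF fT TA])
  let ?V = "{x \<in> carrier R. pr x \<in> ?Sp}"
  have V: "ideal ?V R" by (rule vimage_ideal[OF Sp])
  have BV: "B \<subseteq> ?V"
  proof
    fix b assume b: "b \<in> B"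
    hence "pr b \<in> ?Sp" using TS unfolding T0_def by blast
    thus "b \<in> ?V" using b B(1) by blast
  qed
  have GV: "?G \<subseteq> ?V" unfolding B(3) by (rule genideal_minimal[OF V BV])
  show ?thesis
  proof (intro exI conjI ballI)
    show "finite T0" by (rule fT)
    show "T0 \<subseteq> N k" by (rule TN)
    fix X assume X: "X \<in> N k"
    hence "X \<in> carrier A" using N_carr by blast
    then obtain x where x: "x \<in> carrier R" "X = pr x" by (rule A_elem)
    hence "x \<in> ?G" using X by simp
    hence "x \<in> ?V" using GV by blast
    hence "pr x \<in> ?Sp" by simp
    thus "\<exists>a\<in>T0 \<rightarrow> carrier A. X = (\<Oplus>\<^bsub>A\<^esub> t\<in>T0. a t \<otimes>\<^bsub>A\<^esub> t)" unfolding x(2) by simp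
  qed
qed

lemma basis_exists: "\<exists>S. graded_basis A W k S"
proof -
  from N_span[of k] obtain T0 where T0: "finite T0 \<and> T0 \<subseteq> N k \<and>
    (\<forall>X\<in>N k. \<exists>a\<in>T0 \<rightarrow> carrier A. X = (\<Oplus>\<^bsub>A\<^esub> t\<in>T0. a t \<otimes>\<^bsub>A\<^esub> t))"
    by (rule exE)
  have T: "finite T0" "T0 \<subseteq> N k"
    "\<forall>X\<in>N k. \<exists>a\<in>T0 \<rightarrow> carrier A. X = (\<Oplus>\<^bsub>A\<^esub> t\<in>T0. a t \<otimes>\<^bsub>A\<^esub> t)"
    using T0 by simp_all
  define sp where "sp S \<longleftrightarrow> S \<subseteq> T0 \<and> (\<forall>X\<in>N k. \<exists>a\<in>S \<rightarrow> carrier A.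
      X \<ominus>\<^bsub>A\<^esub> (\<Oplus>\<^bsub>A\<^esub> s\<in>S. a s \<otimes>\<^bsub>A\<^esub> s) \<in> N (Suc k))" for S
  have zN: "\<zero>\<^bsub>A\<^esub> \<in> N (Suc k)" by (rule additive_subgroup.zero_closed[OF ideal.axioms(1)[OF N_ideal]])
  have "sp T0"
    unfolding sp_def
  proof (intro conjI ballI subset_refl)
    fix X assume X: "X \<in> N k"
    obtain a where a: "a \<in> T0 \<rightarrow> carrier A" "X = (\<Oplus>\<^bsub>A\<^esub> t\<in>T0. a t \<otimes>\<^bsub>A\<^esub> t)" using T(3) X by blast
    have Xc: "X \<in> carrier A" using X N_carr by blast
    have "X \<ominus>\<^bsub>A\<^esub> X = \<zero>\<^bsub>A\<^esub>" using Aq.eq_iff_minus_zero[OF Xc Xc] by simp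
    hence "X \<ominus>\<^bsub>A\<^esub> (\<Oplus>\<^bsub>A\<^esub> t\<in>T0. a t \<otimes>\<^bsub>A\<^esub> t) \<in> N (Suc k)" using zN a(2) by simp
    thus "\<exists>a\<in>T0 \<rightarrow> carrier A. X \<ominus>\<^bsub>A\<^esub> (\<Oplus>\<^bsub>A\<^esub> t\<in>T0. a t \<otimes>\<^bsub>A\<^esub> t) \<in> N (Suc k)"
      using a(1) by blast
  qed
  then obtain S where S: "sp S" and Smin: "\<And>S'. sp S' \<Longrightarrow> card S \<le> card S'"
    using ex_has_least_nat[of sp T0 card] by auto
  have ST: "S \<subseteq> T0" using S unfolding sp_def by blast
  have fS: "finite S" using T(1) ST by (rule finite_subset[rotated])
  have SN: "S \<subseteq> N k" using ST T(2) by (rule subset_trans)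
  have SA: "S \<subseteq> carrier A" using SN N_carr by (rule subset_trans)
  have span: "\<forall>X\<in>N k. \<exists>a\<in>S \<rightarrow> carrier A. X \<ominus>\<^bsub>A\<^esub> (\<Oplus>\<^bsub>A\<^esub> s\<in>S. a s \<otimes>\<^bsub>A\<^esub> s) \<in> N (Suc k)"
    using S unfolding sp_def by blast
  have indep: "\<forall>s\<in>S. a s \<in> W" if a: "a \<in> S \<rightarrow> carrier A"
    and la: "(\<Oplus>\<^bsub>A\<^esub> s\<in>S. a s \<otimes>\<^bsub>A\<^esub> s) \<in> N (Suc k)" for a
  proof (rule ccontr)
    assume "\<not> (\<forall>s\<in>S. a s \<in> W)"
    then obtain s0 where s0: "s0 \<in> S" "a s0 \<notin> W" by blast
    have as0: "a s0 \<in> carrier A" using a s0(1) by (auto simp: Pi_iff)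
    then obtain \<alpha> where al: "\<alpha> \<in> carrier R" "a s0 = pr \<alpha>" by (rule A_elem)
    have "\<alpha> \<notin> Ji 0" using s0(2) W_iff[OF al(1)] al(2) by simp
    then obtain \<beta> where be: "\<beta> \<in> carrier R" "\<beta> \<otimes> \<alpha> \<ominus> \<one> \<in> Ji 0" using inv_J[OF al(1)] by blast
    have bac: "\<beta> \<otimes> \<alpha> \<ominus> \<one> \<in> carrier R" using be(1) al(1) by simp
    have "pr (\<beta> \<otimes> \<alpha> \<ominus> \<one>) = pr \<beta> \<otimes>\<^bsub>A\<^esub> a s0 \<ominus>\<^bsub>A\<^esub> \<one>\<^bsub>A\<^esub>"
      using be(1) al by (simp add: pr_sub pr_mult pr_one)
    moreover have "pr (\<beta> \<otimes> \<alpha> \<ominus> \<one>) \<in> W" using W_iff[OF bac] be(2) by simp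
    ultimately have w: "pr \<beta> \<otimes>\<^bsub>A\<^esub> a s0 \<ominus>\<^bsub>A\<^esub> \<one>\<^bsub>A\<^esub> \<in> W" by simp
    have s0N: "s0 \<in> N k" using SN s0(1) by blast
    have bs: "(pr \<beta> \<otimes>\<^bsub>A\<^esub> a s0 \<ominus>\<^bsub>A\<^esub> \<one>\<^bsub>A\<^esub>) \<otimes>\<^bsub>A\<^esub> s0 \<in> N (Suc k)"
      by (rule N_mult'[OF s0N w])
    have bc: "pr \<beta> \<in> carrier A" by (rule pr_closed[OF be(1)])
    have "sp (S - {s0})"
      unfolding sp_def
    proof (intro conjI ballI)
      show "S - {s0} \<subseteq> T0" using ST by blast
      fix X assume X: "X \<in> N k"
      have Xc: "X \<in> carrier A" using X N_carr by blast
      obtain c where c: "c \<in> S \<rightarrow> carrier A" "X \<ominus>\<^bsub>A\<^esub> (\<Oplus>\<^bsub>A\<^esub> s\<in>S. c s \<otimes>\<^bsub>A\<^esub> s) \<in> N (Suc k)"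
        using span X by blast
      show "\<exists>c'\<in>(S - {s0}) \<rightarrow> carrier A. X \<ominus>\<^bsub>A\<^esub> (\<Oplus>\<^bsub>A\<^esub> s\<in>S - {s0}. c' s \<otimes>\<^bsub>A\<^esub> s) \<in> N (Suc k)"
        by (rule Aq.drop_elem[OF N_ideal fS SA s0(1) a la bc bs Xc c(1) c(2)])
    qed
    hence "card S \<le> card (S - {s0})" by (rule Smin)
    moreover have "card (S - {s0}) < card S" using fS s0(1) by (rule card_Diff1_less)
    ultimately show False by simp
  qed
  have "graded_basis A W k S"
    unfolding graded_basis_def N_def[symmetric]
  proof (intro conjI)
    show "finite S" by (rule fS)
    show "S \<subseteq> N k" by (rule SN)
    show "\<forall>a\<in>S \<rightarrow> carrier A. (\<Oplus>\<^bsub>A\<^esub> s\<in>S. a s \<otimes>\<^bsub>A\<^esub> s) \<in> N (Suc k) \<longrightarrow> (\<forall>s\<in>S. a s \<in> W)"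
      by (intro ballI impI indep)
    show "\<forall>X\<in>N k. \<exists>a\<in>S \<rightarrow> carrier A. X \<ominus>\<^bsub>A\<^esub> (\<Oplus>\<^bsub>A\<^esub> s\<in>S. a s \<otimes>\<^bsub>A\<^esub> s) \<in> N (Suc k)"
      by (rule span)
  qed
  thus ?thesis by (rule exI)
qed

definition "Sb k = (SOME S. graded_basis A (max_ideal A) k S)"

lemma Sb_basis: "graded_basis A W k (Sb k)"
  unfolding Sb_def maxA using basis_exists by (rule someI_ex)

lemma Sb_card: "graded_dim A k = card (Sb k)"
  unfolding graded_dim_def Sb_def by simp

lemma Sb_fin: "finite (Sb k)" using Sb_basis unfolding graded_basis_def by blast
lemma Sb_N: "Sb k \<subseteq> N k" using Sb_basis unfolding graded_basis_def N_def by blast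
lemma Sb_span: "X \<in> N k \<Longrightarrow> \<exists>a\<in>Sb k \<rightarrow> carrier A. X \<ominus>\<^bsub>A\<^esub> (\<Oplus>\<^bsub>A\<^esub> s\<in>Sb k. a s \<otimes>\<^bsub>A\<^esub> s) \<in> N (Suc k)"
  using Sb_basis unfolding graded_basis_def N_def by blast

end


lemma comb_levels:
  fixes lev :: "'u \<Rightarrow> nat" and d :: "nat \<Rightarrow> nat"
  assumes U: "finite U" and cnt: "\<And>k. card {u\<in>U. lev u = k} \<le> d k"
  shows "X \<subseteq> U \<Longrightarrow> card X = t \<Longrightarrow> (\<Sum>i=1..t. (LEAST k. i \<le> (\<Sum>j\<le>k. d j))) \<le> (\<Sum>u\<in>X. lev u)"
proof (induction t arbitrary: X)
  case 0 then show ?case by simp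
next
  case (Suc t)
  have fX: "finite X" using Suc.prems(1) U by (rule finite_subset)
  have ne: "X \<noteq> {}" using Suc.prems(2) by auto
  define m where "m = Max (lev ` X)"
  have "m \<in> lev ` X" unfolding m_def using fX ne by (intro Max_in) auto
  then obtain u0 where u0: "u0 \<in> X" "lev u0 = m" by auto
  have le: "lev u \<le> m" if "u \<in> X" for u unfolding m_def using fX that by (intro Max_ge) auto
  let ?X' = "X - {u0}"
  have cX': "card ?X' = t" using Suc.prems(2) u0(1) fX by simp
  have IH: "(\<Sum>i=1..t. (LEAST k. i \<le> (\<Sum>j\<le>k. d j))) \<le> (\<Sum>u\<in>?X'. lev u)"
    using Suc.IH[of ?X'] Suc.prems(1) cX' by blast
  have sumX: "(\<Sum>u\<in>X. lev u) = lev u0 + (\<Sum>u\<in>?X'. lev u)"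
    using fX u0(1) by (rule sum.remove)
  have sub: "X \<subseteq> (\<Union>j\<in>{..m}. {u\<in>U. lev u = j})" using le Suc.prems(1) by auto
  have fin: "finite (\<Union>j\<in>{..m}. {u\<in>U. lev u = j})" using U by auto
  have "Suc t = card X" using Suc.prems(2) by simp
  also have "\<dots> \<le> card (\<Union>j\<in>{..m}. {u\<in>U. lev u = j})" using fin sub by (rule card_mono)
  also have "\<dots> \<le> (\<Sum>j\<in>{..m}. card {u\<in>U. lev u = j})" by (rule card_UN_le) simp
  also have "\<dots> \<le> (\<Sum>j\<le>m. d j)" by (rule sum_mono) (rule cnt)
  finally have "Suc t \<le> (\<Sum>j\<le>m. d j)" .
  hence L: "(LEAST k. Suc t \<le> (\<Sum>j\<le>k. d j)) \<le> m" by (rule Least_le)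
  have "(\<Sum>i=1..Suc t. (LEAST k. i \<le> (\<Sum>j\<le>k. d j))) =
        (\<Sum>i=1..t. (LEAST k. i \<le> (\<Sum>j\<le>k. d j))) + (LEAST k. Suc t \<le> (\<Sum>j\<le>k. d j))"
    by simp
  also have "\<dots> \<le> (\<Sum>u\<in>?X'. lev u) + m" using IH L by simp
  also have "\<dots> = (\<Sum>u\<in>X. lev u)" using sumX u0(2) by simp
  finally show ?case .
qed

lemma det_core:
  fixes B :: "nat \<Rightarrow> nat \<Rightarrow> int" and cc :: "nat \<Rightarrow> nat \<Rightarrow> int" and ww :: "nat \<Rightarrow> nat \<Rightarrow> int"
    and lev :: "nat \<Rightarrow> nat" and d :: "nat \<Rightarrow> nat" and p :: int
  assumes Bc: "\<And>i j. i < s \<Longrightarrow> j < s \<Longrightarrow> B i j mod p ^ K = (\<Sum>u\<in>{0..<m}. cc j u * ww u i) mod p ^ K"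
    and wd: "\<And>u i. u < m \<Longrightarrow> i < s \<Longrightarrow> p ^ lev u dvd ww u i"
    and cnt: "\<And>k. card {u\<in>{0..<m}. lev u = k} \<le> d k"
    and K: "K \<le> (\<Sum>i=1..s. LEAST k. i \<le> (\<Sum>j\<le>k. d j))"
  shows "(\<Sum>\<sigma>\<in>{\<sigma>. \<sigma> permutes {0..<s}}. sign \<sigma> * (\<Prod>i\<in>{0..<s}. B i (\<sigma> i))) mod p ^ K = 0"
proof -
  let ?P = "{\<sigma>. \<sigma> permutes {0..<s}}"
  let ?q = "p ^ K"
  define B' where "B' i j = (\<Sum>u\<in>{0..<m}. cc j u * ww u i)" for i j
  have step1: "(\<Sum>\<sigma>\<in>?P. sign \<sigma> * (\<Prod>i\<in>{0..<s}. B i (\<sigma> i))) mod ?q =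
               (\<Sum>\<sigma>\<in>?P. sign \<sigma> * (\<Prod>i\<in>{0..<s}. B' i (\<sigma> i))) mod ?q"
  proof -
    have "(sign \<sigma> * (\<Prod>i\<in>{0..<s}. B i (\<sigma> i))) mod ?q = (sign \<sigma> * (\<Prod>i\<in>{0..<s}. B' i (\<sigma> i))) mod ?q"
      if \<sigma>: "\<sigma> \<in> ?P" for \<sigma>
    proof -
      have "(\<Prod>i\<in>{0..<s}. B i (\<sigma> i)) mod ?q = (\<Prod>i\<in>{0..<s}. B i (\<sigma> i) mod ?q) mod ?q"
        by (rule mod_prod_eq[symmetric])
      also have "(\<Prod>i\<in>{0..<s}. B i (\<sigma> i) mod ?q) = (\<Prod>i\<in>{0..<s}. B' i (\<sigma> i) mod ?q)"
      proof (rule prod.cong[OF refl])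
        fix i assume i: "i \<in> {0..<s}"
        have "\<sigma> i < s" using \<sigma> i permutes_in_image by fastforce
        thus "B i (\<sigma> i) mod ?q = B' i (\<sigma> i) mod ?q" using Bc i by (simp add: B'_def)
      qed
      also have "(\<Prod>i\<in>{0..<s}. B' i (\<sigma> i) mod ?q) mod ?q = (\<Prod>i\<in>{0..<s}. B' i (\<sigma> i)) mod ?q"
        by (rule mod_prod_eq)
      finally have e: "(\<Prod>i\<in>{0..<s}. B i (\<sigma> i)) mod ?q = (\<Prod>i\<in>{0..<s}. B' i (\<sigma> i)) mod ?q" .
      have "(sign \<sigma> * (\<Prod>i\<in>{0..<s}. B i (\<sigma> i))) mod ?q = (sign \<sigma> * ((\<Prod>i\<in>{0..<s}. B i (\<sigma> i)) mod ?q)) mod ?q"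
        by (rule mod_mult_right_eq[symmetric])
      also have "\<dots> = (sign \<sigma> * ((\<Prod>i\<in>{0..<s}. B' i (\<sigma> i)) mod ?q)) mod ?q" by (simp only: e)
      also have "\<dots> = (sign \<sigma> * (\<Prod>i\<in>{0..<s}. B' i (\<sigma> i))) mod ?q" by (rule mod_mult_right_eq)
      finally show ?thesis .
    qed
    hence "(\<Sum>\<sigma>\<in>?P. (sign \<sigma> * (\<Prod>i\<in>{0..<s}. B i (\<sigma> i))) mod ?q) = (\<Sum>\<sigma>\<in>?P. (sign \<sigma> * (\<Prod>i\<in>{0..<s}. B' i (\<sigma> i))) mod ?q)"
      by (rule sum.cong[OF refl])
    hence "(\<Sum>\<sigma>\<in>?P. (sign \<sigma> * (\<Prod>i\<in>{0..<s}. B i (\<sigma> i))) mod ?q) mod ?q = (\<Sum>\<sigma>\<in>?P. (sign \<sigma> * (\<Prod>i\<in>{0..<s}. B' i (\<sigma> i))) mod ?q) mod ?q"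
      by simp
    thus ?thesis by (simp only: mod_sum_eq)
  qed
  define wv where "wv u = vec s (\<lambda>i. ww u i)" for u
  have wvc: "wv u \<in> carrier_vec s" for u by (simp add: wv_def)
  define a where "a j u = cc j u \<cdot>\<^sub>v wv u" for j u
  have ac: "a \<in> {0..<s} \<rightarrow> {0..<m} \<rightarrow> carrier_vec s" by (simp add: a_def wvc)
  define Mt where "Mt = mat\<^sub>r s s (\<lambda>j. finsum_vec TYPE(int) s (a j) {0..<m})"
  have Mtc: "Mt \<in> carrier_mat s s" by (simp add: Mt_def)
  have entry: "Mt $$ (j, i) = B' i j" if "i < s" "j < s" for i j
  proof -
    have "Mt $$ (j, i) = finsum_vec TYPE(int) s (a j) {0..<m} $ i" using that by (simp add: Mt_def)
    also have "\<dots> = (\<Sum>u\<in>{0..<m}. a j u $ i)"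
      by (rule index_finsum_vec) (use that ac in auto)
    also have "\<dots> = B' i j" unfolding B'_def a_def wv_def using that by (intro sum.cong) auto
    finally show ?thesis .
  qed
  have step2: "det Mt = (\<Sum>\<sigma>\<in>?P. sign \<sigma> * (\<Prod>i\<in>{0..<s}. B' i (\<sigma> i)))"
  proof -
    have "det Mt = det (transpose_mat Mt)" using det_transpose[OF Mtc] by simp
    also have "\<dots> = (\<Sum>\<sigma>\<in>?P. signof \<sigma> * (\<Prod>i\<in>{0..<s}. transpose_mat Mt $$ (i, \<sigma> i)))"
      by (rule det_def') (simp add: Mtc)
    also have "\<dots> = (\<Sum>\<sigma>\<in>?P. sign \<sigma> * (\<Prod>i\<in>{0..<s}. B' i (\<sigma> i)))"
    proof (rule sum.cong[OF refl])
      fix \<sigma> assume \<sigma>: "\<sigma> \<in> ?P"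
      have "(\<Prod>i\<in>{0..<s}. transpose_mat Mt $$ (i, \<sigma> i)) = (\<Prod>i\<in>{0..<s}. B' i (\<sigma> i))"
      proof (rule prod.cong[OF refl])
        fix i assume i: "i \<in> {0..<s}"
        have si: "\<sigma> i < s" using \<sigma> i permutes_in_image by fastforce
        have "transpose_mat Mt $$ (i, \<sigma> i) = Mt $$ (\<sigma> i, i)" using i si Mtc by simp
        also have "\<dots> = B' i (\<sigma> i)" using entry i si by simp
        finally show "transpose_mat Mt $$ (i, \<sigma> i) = B' i (\<sigma> i)" .
      qed
      thus "signof \<sigma> * (\<Prod>i\<in>{0..<s}. transpose_mat Mt $$ (i, \<sigma> i)) = sign \<sigma> * (\<Prod>i\<in>{0..<s}. B' i (\<sigma> i))"
        by simp
    qed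
    finally show ?thesis .
  qed
  let ?F = "{f. (\<forall>i\<in>{0..<s}. f i \<in> {0..<m}) \<and> (\<forall>i. i \<notin> {0..<s} \<longrightarrow> f i = i)}"
  have step3: "det Mt = (\<Sum>f\<in>?F. det (mat\<^sub>r s s (\<lambda>j. a j (f j))))"
    unfolding Mt_def by (rule det_linear_rows_sum[OF _ ac]) simp
  have term_dvd: "?q dvd det (mat\<^sub>r s s (\<lambda>j. a j (f j)))" if f: "f \<in> ?F" for f
  proof -
    have fr: "(\<lambda>j. wv (f j)) \<in> {0..<s} \<rightarrow> carrier_vec s" using wvc by simp
    have "det (mat\<^sub>r s s (\<lambda>j. a j (f j))) = prod (\<lambda>j. cc j (f j)) {0..<s} * det (mat\<^sub>r s s (\<lambda>j. wv (f j)))"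
      unfolding a_def by (rule det_rows_mul[OF fr])
    moreover have "?q dvd det (mat\<^sub>r s s (\<lambda>j. wv (f j)))"
    proof (cases "inj_on f {0..<s}")
      case False
      then obtain j1 j2 where j: "j1 \<in> {0..<s}" "j2 \<in> {0..<s}" "j1 \<noteq> j2" "f j1 = f j2"
        unfolding inj_on_def by blast
      have "det (mat\<^sub>r s s (\<lambda>j. wv (f j))) = 0"
      proof (rule det_identical_rows[OF _ j(3)])
        show "mat\<^sub>r s s (\<lambda>j. wv (f j)) \<in> carrier_mat s s" by simp
        show "j1 < s" "j2 < s" using j by auto
        show "row (mat\<^sub>r s s (\<lambda>j. wv (f j))) j1 = row (mat\<^sub>r s s (\<lambda>j. wv (f j))) j2"
          using j by (simp add: wv_def)
      qed
      thus ?thesis by simp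
    next
      case True
      define uv where "uv u = vec s (\<lambda>i. ww u i div p ^ lev u)" for u
      have uvc: "(\<lambda>j. uv (f j)) \<in> {0..<s} \<rightarrow> carrier_vec s" by (simp add: uv_def)
      have eqv: "wv (f j) = p ^ lev (f j) \<cdot>\<^sub>v uv (f j)" if j: "j < s" for j
      proof (rule eq_vecI)
        show "dim_vec (wv (f j)) = dim_vec (p ^ lev (f j) \<cdot>\<^sub>v uv (f j))" by (simp add: wv_def uv_def)
        fix i assume "i < dim_vec (p ^ lev (f j) \<cdot>\<^sub>v uv (f j))"
        hence i: "i < s" by (simp add: uv_def)
        have fj: "f j < m" using f j by auto
        have "p ^ lev (f j) dvd ww (f j) i" by (rule wd[OF fj i])
        thus "wv (f j) $ i = (p ^ lev (f j) \<cdot>\<^sub>v uv (f j)) $ i" using i by (simp add: wv_def uv_def)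
      qed
      have "mat\<^sub>r s s (\<lambda>j. wv (f j)) = mat\<^sub>r s s (\<lambda>j. p ^ lev (f j) \<cdot>\<^sub>v uv (f j))"
      proof (rule eq_rowI)
        fix j assume "j < dim_row (mat\<^sub>r s s (\<lambda>j. p ^ lev (f j) \<cdot>\<^sub>v uv (f j)))"
        hence j: "j < s" by simp
        have d1: "dim_vec (wv (f j)) = s" by (simp add: wv_def)
        have d2: "dim_vec (p ^ lev (f j) \<cdot>\<^sub>v uv (f j)) = s" by (simp add: uv_def)
        have "row (mat\<^sub>r s s (\<lambda>j. wv (f j))) j = wv (f j)" using j d1 by simp
        also have "\<dots> = p ^ lev (f j) \<cdot>\<^sub>v uv (f j)" by (rule eqv[OF j])
        also have "\<dots> = row (mat\<^sub>r s s (\<lambda>j. p ^ lev (f j) \<cdot>\<^sub>v uv (f j))) j" using j d2 by simp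
        finally show "row (mat\<^sub>r s s (\<lambda>j. wv (f j))) j = row (mat\<^sub>r s s (\<lambda>j. p ^ lev (f j) \<cdot>\<^sub>v uv (f j))) j" .
      qed simp_all
      hence dd: "det (mat\<^sub>r s s (\<lambda>j. wv (f j))) = prod (\<lambda>j. p ^ lev (f j)) {0..<s} * det (mat\<^sub>r s s (\<lambda>j. uv (f j)))"
        using det_rows_mul[OF uvc] by simp
      have "prod (\<lambda>j. p ^ lev (f j)) {0..<s} = p ^ (\<Sum>j\<in>{0..<s}. lev (f j))" by (simp add: power_sum)
      moreover have "(\<Sum>j\<in>{0..<s}. lev (f j)) = (\<Sum>u\<in>f ` {0..<s}. lev u)"
        using True by (simp add: sum.reindex)
      moreover have "(\<Sum>i=1..s. LEAST k. i \<le> (\<Sum>j\<le>k. d j)) \<le> (\<Sum>u\<in>f ` {0..<s}. lev u)"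
      proof (rule comb_levels[of "{0..<m}" lev d])
        show "finite {0..<m}" by simp
        show "\<And>k. card {u \<in> {0..<m}. lev u = k} \<le> d k" by (rule cnt)
        show "f ` {0..<s} \<subseteq> {0..<m}" using f by auto
        show "card (f ` {0..<s}) = s" using True by (simp add: card_image)
      qed
      ultimately have "K \<le> (\<Sum>j\<in>{0..<s}. lev (f j))" "prod (\<lambda>j. p ^ lev (f j)) {0..<s} = p ^ (\<Sum>j\<in>{0..<s}. lev (f j))"
        using K by simp_all
      hence "?q dvd prod (\<lambda>j. p ^ lev (f j)) {0..<s}" by (simp add: le_imp_power_dvd)
      thus ?thesis unfolding dd by simp
    qed
    ultimately show ?thesis by simp
  qed
  have "?q dvd det Mt" unfolding step3 by (rule dvd_sum) (rule term_dvd)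
  hence "(\<Sum>\<sigma>\<in>?P. sign \<sigma> * (\<Prod>i\<in>{0..<s}. B' i (\<sigma> i))) mod ?q = 0" using step2 by simp
  thus ?thesis using step1 by simp
qed



lemma (in cring) finsum_in_ideal:
  assumes J: "ideal J R" and fT: "finite T" and f: "f \<in> T \<rightarrow> J"
  shows "finsum R f T \<in> J"
  using fT f
proof (induction T rule: finite_induct)
  case empty
  then show ?case using additive_subgroup.zero_closed[OF ideal.axioms(1)[OF J]] by simp
next
  case (insert x F)
  have fc: "f \<in> F \<rightarrow> carrier R" using insert(4) ideal.Icarr[OF J] by (auto simp: Pi_iff)
  have fx: "f x \<in> carrier R" using insert(4) ideal.Icarr[OF J] by (auto simp: Pi_iff)
  have "finsum R f (insert x F) = f x \<oplus> finsum R f F"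
    by (rule finsum_insert[OF insert(1,2) fc fx])
  moreover have "f x \<in> J" using insert(4) by auto
  moreover have "finsum R f F \<in> J" using insert(3,4) by (auto simp: Pi_iff)
  ultimately show ?case using additive_subgroup.a_closed[OF ideal.axioms(1)[OF J]] by simp
qed

context main begin

definition "E K = Sigma {..<K} Sb"
definition "Lf q = (SOME y. y \<in> Fs (fst q) \<and> snd q = pr y)"

lemma E_fin: "finite (E K)" unfolding E_def using Sb_fin by (intro finite_SigmaI) auto

lemma Lf_prop: assumes "snd q \<in> Sb (fst q)" shows "Lf q \<in> Fs (fst q) \<and> snd q = pr (Lf q)"
proof -
  have "snd q \<in> pr ` Fs (fst q)" using assms Sb_N N_sub by blast
  then obtain y where "y \<in> Fs (fst q)" "snd q = pr y" by blast
  hence "\<exists>y. y \<in> Fs (fst q) \<and> snd q = pr y" by blast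
  thus ?thesis unfolding Lf_def by (rule someI_ex)
qed

lemma Lf_E: "q \<in> E K \<Longrightarrow> Lf q \<in> Fs (fst q) \<and> snd q = pr (Lf q)"
  by (rule Lf_prop) (auto simp: E_def)

lemma Lf_carr: "q \<in> E K \<Longrightarrow> Lf q \<in> carrier R"
  using Lf_E by (simp add: Fs_def)

definition "Spn K x \<longleftrightarrow> x \<in> carrier R \<and>
   (\<exists>c. \<forall>i<s. \<phi> i x K = (\<Sum>q\<in>E K. c q * \<phi> i (Lf q) K) mod p ^ K)"

lemma Spn_carr: "Spn K x \<Longrightarrow> x \<in> carrier R" by (simp add: Spn_def)

lemma Spn_zero: "Spn K \<zero>"
  unfolding Spn_def by (intro conjI exI[where x="\<lambda>_. 0"] allI impI) (simp_all add: phi_zero)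

lemma Spn_F: "x \<in> Fs K \<Longrightarrow> Spn K x"
  unfolding Spn_def Fs_def by (intro conjI exI[where x="\<lambda>_. 0"]) auto

lemma Spn_add: assumes "Spn K x" "Spn K y" shows "Spn K (x \<oplus> y)"
proof -
  obtain c where c: "\<forall>i<s. \<phi> i x K = (\<Sum>q\<in>E K. c q * \<phi> i (Lf q) K) mod p ^ K"
    using assms(1) unfolding Spn_def by (elim conjE exE)
  obtain d where d: "\<forall>i<s. \<phi> i y K = (\<Sum>q\<in>E K. d q * \<phi> i (Lf q) K) mod p ^ K"
    using assms(2) unfolding Spn_def by (elim conjE exE)
  have xc: "x \<in> carrier R" and yc: "y \<in> carrier R" using assms Spn_carr by auto
  have "\<phi> i (x \<oplus> y) K = (\<Sum>q\<in>E K. (c q + d q) * \<phi> i (Lf q) K) mod p ^ K" if i: "i < s" for i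
  proof -
    have "\<phi> i (x \<oplus> y) K = (\<phi> i x K + \<phi> i y K) mod p ^ K" by (rule phi_add[OF i xc yc])
    also have "\<dots> = ((\<Sum>q\<in>E K. c q * \<phi> i (Lf q) K) mod p ^ K + (\<Sum>q\<in>E K. d q * \<phi> i (Lf q) K) mod p ^ K) mod p ^ K"
      using c d i by simp
    also have "\<dots> = ((\<Sum>q\<in>E K. c q * \<phi> i (Lf q) K) + (\<Sum>q\<in>E K. d q * \<phi> i (Lf q) K)) mod p ^ K"
      by (rule mod_add_eq)
    also have "(\<Sum>q\<in>E K. c q * \<phi> i (Lf q) K) + (\<Sum>q\<in>E K. d q * \<phi> i (Lf q) K) = (\<Sum>q\<in>E K. (c q + d q) * \<phi> i (Lf q) K)"
      by (simp add: sum.distrib distrib_right)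
    finally show ?thesis .
  qed
  thus ?thesis unfolding Spn_def using xc yc by (intro conjI exI[where x="\<lambda>q. c q + d q"]) auto
qed

lemma Spn_sc: assumes a: "a \<in> Sc" and y: "Spn K y" shows "Spn K (a \<otimes> y)"
proof -
  obtain c where c: "\<forall>i<s. \<phi> i y K = (\<Sum>q\<in>E K. c q * \<phi> i (Lf q) K) mod p ^ K"
    using y unfolding Spn_def by (elim conjE exE)
  have ac: "a \<in> carrier R" using a Sc_carr by blast
  have yc: "y \<in> carrier R" using y Spn_carr by blast
  have "\<phi> i (a \<otimes> y) K = (\<Sum>q\<in>E K. (\<phi> 0 a K * c q) * \<phi> i (Lf q) K) mod p ^ K" if i: "i < s" for i
  proof -
    have "\<phi> i (a \<otimes> y) K = (\<phi> i a K * \<phi> i y K) mod p ^ K" by (rule phi_mult[OF i ac yc])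
    also have "\<phi> i a = \<phi> 0 a" by (rule ScD[OF a i])
    also have "(\<phi> 0 a K * \<phi> i y K) mod p ^ K = (\<phi> 0 a K * ((\<Sum>q\<in>E K. c q * \<phi> i (Lf q) K) mod p ^ K)) mod p ^ K"
      using c i by simp
    also have "\<dots> = (\<phi> 0 a K * (\<Sum>q\<in>E K. c q * \<phi> i (Lf q) K)) mod p ^ K" by (rule mod_mult_right_eq)
    also have "\<phi> 0 a K * (\<Sum>q\<in>E K. c q * \<phi> i (Lf q) K) = (\<Sum>q\<in>E K. (\<phi> 0 a K * c q) * \<phi> i (Lf q) K)"
      by (simp add: sum_distrib_left mult.assoc)
    finally show ?thesis .
  qed
  moreover have "a \<otimes> y \<in> carrier R" using ac yc by simp
  ultimately show ?thesis unfolding Spn_def by (intro conjI exI[where x="\<lambda>q. \<phi> 0 a K * c q"]) auto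
qed

lemma Spn_L: assumes q0: "q0 \<in> E K" shows "Spn K (Lf q0)"
proof -
  have Lc: "Lf q0 \<in> carrier R" by (rule Lf_carr[OF q0])
  have "\<phi> i (Lf q0) K = (\<Sum>q\<in>E K. (if q = q0 then 1 else 0) * \<phi> i (Lf q) K) mod p ^ K" if i: "i < s" for i
  proof -
    have "(\<Sum>q\<in>E K. (if q = q0 then 1 else 0) * \<phi> i (Lf q) K) = (\<Sum>q\<in>E K. (if q = q0 then \<phi> i (Lf q) K else 0))"
      by (rule sum.cong) auto
    also have "\<dots> = \<phi> i (Lf q0) K" using E_fin q0 by simp
    finally show ?thesis using phi_bounds[OF i Lc, of K] by simp
  qed
  thus ?thesis unfolding Spn_def using Lc by (intro conjI exI[where x="\<lambda>q. if q = q0 then 1 else 0"]) auto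
qed

lemma Spn_fin: assumes fT: "finite T" and h: "\<forall>e\<in>T. \<sigma> e \<in> Sc \<and> Spn K (g e)"
  shows "Spn K (\<Oplus>e\<in>T. \<sigma> e \<otimes> g e)"
  using fT h
proof (induction T rule: finite_induct)
  case empty then show ?case using Spn_zero by simp
next
  case (insert x F)
  have sc: "\<sigma> e \<otimes> g e \<in> carrier R" if "e \<in> insert x F" for e
  proof -
    have "\<sigma> e \<in> Sc" "Spn K (g e)" using insert(4) that by auto
    hence "\<sigma> e \<in> carrier R" "g e \<in> carrier R" using Sc_carr Spn_carr by auto
    thus ?thesis by simp
  qed
  have "(\<Oplus>e\<in>insert x F. \<sigma> e \<otimes> g e) = \<sigma> x \<otimes> g x \<oplus> (\<Oplus>e\<in>F. \<sigma> e \<otimes> g e)"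
    by (rule finsum_insert[OF insert(1,2)]) (use sc in auto)
  moreover have "Spn K (\<sigma> x \<otimes> g x)" using insert(4) Spn_sc by simp
  moreover have "Spn K (\<Oplus>e\<in>F. \<sigma> e \<otimes> g e)" using insert(3,4) by simp
  ultimately show ?case using Spn_add by simp
qed

end


context cring begin
lemma alg1: "a \<in> carrier R \<Longrightarrow> b \<in> carrier R \<Longrightarrow> c \<in> carrier R \<Longrightarrow> a \<ominus> c = (a \<ominus> (b \<oplus> c)) \<oplus> b"
  by algebra
lemma alg2: "u \<in> carrier R \<Longrightarrow> v \<in> carrier R \<Longrightarrow> (u \<ominus> v) \<oplus> v = u"
  by algebra
lemma alg3: "x \<in> carrier R \<Longrightarrow> a \<in> carrier R \<Longrightarrow> b \<in> carrier R \<Longrightarrow> x \<ominus> (a \<oplus> b) = (x \<ominus> a) \<ominus> b"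
  by algebra
lemma alg4: "x \<in> carrier R \<Longrightarrow> y \<in> carrier R \<Longrightarrow> f \<in> carrier R \<Longrightarrow> x = (y \<oplus> f) \<oplus> ((x \<ominus> y) \<ominus> f)"
  by algebra
lemma alg5: "y \<in> carrier R \<Longrightarrow> y' \<in> carrier R \<Longrightarrow> z' \<in> carrier R \<Longrightarrow> P \<in> carrier R \<Longrightarrow> Q \<in> carrier R \<Longrightarrow>
   y \<oplus> (y' \<oplus> z' \<otimes> P) \<otimes> Q = (y \<oplus> Q \<otimes> y') \<oplus> z' \<otimes> (Q \<otimes> P)"
  by algebra
end

context main begin

lemma step:
  assumes k: "k < K" and x: "x \<in> carrier R" and xN: "pr x \<in> N k"
  shows "\<exists>y. Spn K y \<and> pr (x \<ominus> y) \<in> N (Suc k)"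
proof -
  obtain a where a: "a \<in> Sb k \<rightarrow> carrier A"
    and ax: "pr x \<ominus>\<^bsub>A\<^esub> (\<Oplus>\<^bsub>A\<^esub> e\<in>Sb k. a e \<otimes>\<^bsub>A\<^esub> e) \<in> N (Suc k)"
    using Sb_span[OF xN] by blast
  define \<alpha> where "\<alpha> e = (SOME z. z \<in> carrier R \<and> a e = pr z)" for e
  have \<alpha>: "\<alpha> e \<in> carrier R \<and> a e = pr (\<alpha> e)" if e: "e \<in> Sb k" for e
  proof -
    have "a e \<in> carrier A" using a e by (rule funcset_mem)
    then obtain z where "z \<in> carrier R" "a e = pr z" by (rule A_elem)
    hence "\<exists>z. z \<in> carrier R \<and> a e = pr z" by blast
    thus ?thesis unfolding \<alpha>_def by (rule someI_ex)
  qed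
  define \<sigma> where "\<sigma> e = (SOME z. z \<in> Sc \<and> \<alpha> e \<ominus> z \<in> Ji 0)" for e
  have \<sigma>: "\<sigma> e \<in> Sc \<and> \<alpha> e \<ominus> \<sigma> e \<in> Ji 0" if e: "e \<in> Sb k" for e
  proof -
    have "\<exists>z\<in>Sc. \<alpha> e \<ominus> z \<in> Ji 0" using residue \<alpha>[OF e] by blast
    hence "\<exists>z. z \<in> Sc \<and> \<alpha> e \<ominus> z \<in> Ji 0" by blast
    thus ?thesis unfolding \<sigma>_def by (rule someI_ex)
  qed
  have \<sigma>c: "\<sigma> e \<in> carrier R" if "e \<in> Sb k" for e using \<sigma>[OF that] Sc_carr by blast
  define g where "g e = Lf (k, e)" for e
  have kE: "(k, e) \<in> E K" if "e \<in> Sb k" for e using k that by (simp add: E_def)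
  have g: "g e \<in> Fs k \<and> e = pr (g e)" if "e \<in> Sb k" for e
    using Lf_E[OF kE[OF that]] by (simp add: g_def)
  have gc: "g e \<in> carrier R" if "e \<in> Sb k" for e using g[OF that] by (simp add: Fs_def)
  define y where "y = (\<Oplus>e\<in>Sb k. \<sigma> e \<otimes> g e)"
  have Spy: "Spn K y" unfolding y_def
  proof (rule Spn_fin[OF Sb_fin], intro ballI conjI)
    fix e assume e: "e \<in> Sb k"
    show "\<sigma> e \<in> Sc" using \<sigma>[OF e] by blast
    show "Spn K (g e)" unfolding g_def by (rule Spn_L[OF kE[OF e]])
  qed
  have yc: "y \<in> carrier R" by (rule Spn_carr[OF Spy])
  have fy: "(\<lambda>e. \<sigma> e \<otimes> g e) \<in> Sb k \<rightarrow> carrier R" using \<sigma>c gc by auto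
  have SbA: "Sb k \<subseteq> carrier A" using Sb_N N_carr by blast
  have cs: "(\<lambda>e. pr (\<sigma> e)) \<in> Sb k \<rightarrow> carrier A" using \<sigma>c pr_closed by auto
  have ca: "(\<lambda>e. a e \<ominus>\<^bsub>A\<^esub> pr (\<sigma> e)) \<in> Sb k \<rightarrow> carrier A"
    using a cs by (auto simp: Pi_iff)
  have pry: "pr y = (\<Oplus>\<^bsub>A\<^esub> e\<in>Sb k. pr (\<sigma> e) \<otimes>\<^bsub>A\<^esub> e)"
  proof -
    have "pr y = (\<Oplus>\<^bsub>A\<^esub> e\<in>Sb k. (pr \<circ> (\<lambda>e. \<sigma> e \<otimes> g e)) e)"
      unfolding y_def by (rule ring_hom_cring.hom_finsum[OF pr_hc fy])
    also have "\<dots> = (\<Oplus>\<^bsub>A\<^esub> e\<in>Sb k. pr (\<sigma> e) \<otimes>\<^bsub>A\<^esub> e)"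
    proof (rule Aq.finsum_cong')
      show "(\<lambda>e. pr (\<sigma> e) \<otimes>\<^bsub>A\<^esub> e) \<in> Sb k \<rightarrow> carrier A" using cs SbA by (auto simp: Pi_iff)
      fix e assume e: "e \<in> Sb k"
      have "pr (\<sigma> e \<otimes> g e) = pr (\<sigma> e) \<otimes>\<^bsub>A\<^esub> pr (g e)" by (rule pr_mult[OF \<sigma>c[OF e] gc[OF e]])
      also have "pr (g e) = e" using g[OF e] by simp
      finally show "(pr \<circ> (\<lambda>e. \<sigma> e \<otimes> g e)) e = pr (\<sigma> e) \<otimes>\<^bsub>A\<^esub> e" by simp
    qed simp
    finally show ?thesis .
  qed
  define D where "D = (\<Oplus>\<^bsub>A\<^esub> e\<in>Sb k. (a e \<ominus>\<^bsub>A\<^esub> pr (\<sigma> e)) \<otimes>\<^bsub>A\<^esub> e)"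
  have DN: "D \<in> N (Suc k)" unfolding D_def
  proof (rule Aq.finsum_in_ideal[OF N_ideal Sb_fin], rule Pi_I)
    fix e assume e: "e \<in> Sb k"
    have "a e \<ominus>\<^bsub>A\<^esub> pr (\<sigma> e) = pr (\<alpha> e \<ominus> \<sigma> e)"
      using \<alpha>[OF e] \<sigma>c[OF e] by (simp add: pr_sub)
    moreover have "pr (\<alpha> e \<ominus> \<sigma> e) \<in> W" using W_iff[of "\<alpha> e \<ominus> \<sigma> e"] \<alpha>[OF e] \<sigma>c[OF e] \<sigma>[OF e] by simp
    ultimately have w: "a e \<ominus>\<^bsub>A\<^esub> pr (\<sigma> e) \<in> W" by simp
    have "e \<in> N k" using Sb_N e by blast
    thus "(a e \<ominus>\<^bsub>A\<^esub> pr (\<sigma> e)) \<otimes>\<^bsub>A\<^esub> e \<in> N (Suc k)" using w by (rule N_mult')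
  qed
  have sumeq: "(\<Oplus>\<^bsub>A\<^esub> e\<in>Sb k. a e \<otimes>\<^bsub>A\<^esub> e) = D \<oplus>\<^bsub>A\<^esub> pr y"
  proof -
    have "D \<oplus>\<^bsub>A\<^esub> pr y = (\<Oplus>\<^bsub>A\<^esub> e\<in>Sb k. ((a e \<ominus>\<^bsub>A\<^esub> pr (\<sigma> e)) \<oplus>\<^bsub>A\<^esub> pr (\<sigma> e)) \<otimes>\<^bsub>A\<^esub> e)"
      unfolding D_def pry by (rule Aq.lin_add[OF SbA ca cs])
    also have "\<dots> = (\<Oplus>\<^bsub>A\<^esub> e\<in>Sb k. a e \<otimes>\<^bsub>A\<^esub> e)"
    proof (rule Aq.finsum_cong')
      show "(\<lambda>e. a e \<otimes>\<^bsub>A\<^esub> e) \<in> Sb k \<rightarrow> carrier A" using a SbA by (auto simp: Pi_iff)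
      fix e assume e: "e \<in> Sb k"
      have "a e \<in> carrier A" using a e by (rule funcset_mem)
      moreover have "pr (\<sigma> e) \<in> carrier A" using cs e by (rule funcset_mem)
      ultimately have "(a e \<ominus>\<^bsub>A\<^esub> pr (\<sigma> e)) \<oplus>\<^bsub>A\<^esub> pr (\<sigma> e) = a e" by (rule Aq.alg2)
      thus "((a e \<ominus>\<^bsub>A\<^esub> pr (\<sigma> e)) \<oplus>\<^bsub>A\<^esub> pr (\<sigma> e)) \<otimes>\<^bsub>A\<^esub> e = a e \<otimes>\<^bsub>A\<^esub> e" by simp
    qed simp
    finally show ?thesis by simp
  qed
  have Dc: "D \<in> carrier A" using DN N_carr by blast
  have pxc: "pr x \<in> carrier A" by (rule pr_closed[OF x])
  have pyc: "pr y \<in> carrier A" by (rule pr_closed[OF yc])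
  have "pr (x \<ominus> y) = pr x \<ominus>\<^bsub>A\<^esub> pr y" by (rule pr_sub[OF x yc])
  also have "\<dots> = (pr x \<ominus>\<^bsub>A\<^esub> (D \<oplus>\<^bsub>A\<^esub> pr y)) \<oplus>\<^bsub>A\<^esub> D" by (rule Aq.alg1[OF pxc Dc pyc])
  also have "\<dots> = (pr x \<ominus>\<^bsub>A\<^esub> (\<Oplus>\<^bsub>A\<^esub> e\<in>Sb k. a e \<otimes>\<^bsub>A\<^esub> e)) \<oplus>\<^bsub>A\<^esub> D" by (simp only: sumeq)
  finally have "pr (x \<ominus> y) = (pr x \<ominus>\<^bsub>A\<^esub> (\<Oplus>\<^bsub>A\<^esub> e\<in>Sb k. a e \<otimes>\<^bsub>A\<^esub> e)) \<oplus>\<^bsub>A\<^esub> D" .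
  moreover have "(pr x \<ominus>\<^bsub>A\<^esub> (\<Oplus>\<^bsub>A\<^esub> e\<in>Sb k. a e \<otimes>\<^bsub>A\<^esub> e)) \<oplus>\<^bsub>A\<^esub> D \<in> N (Suc k)"
    by (rule additive_subgroup.a_closed[OF ideal.axioms(1)[OF N_ideal] ax DN])
  ultimately have "pr (x \<ominus> y) \<in> N (Suc k)" by simp
  thus ?thesis using Spy by blast
qed

lemma iter_K: "d \<le> K \<Longrightarrow> x \<in> carrier R \<Longrightarrow> pr x \<in> N (K - d) \<Longrightarrow> \<exists>y. Spn K y \<and> pr (x \<ominus> y) \<in> N K"
proof (induction d arbitrary: x)
  case 0
  have "x \<ominus> \<zero> = x" using 0 by (simp add: minus_eq)
  thus ?case using 0 Spn_zero by (intro exI[where x="\<zero>"]) simp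
next
  case (Suc d)
  have k: "K - Suc d < K" using Suc.prems(1) by simp
  have ks: "Suc (K - Suc d) = K - d" using Suc.prems(1) by simp
  obtain y1 where y1: "Spn K y1" "pr (x \<ominus> y1) \<in> N (Suc (K - Suc d))"
    using step[OF k Suc.prems(2,3)] by blast
  have y1c: "y1 \<in> carrier R" by (rule Spn_carr[OF y1(1)])
  have x1c: "x \<ominus> y1 \<in> carrier R" using Suc.prems(2) y1c by simp
  obtain y2 where y2: "Spn K y2" "pr ((x \<ominus> y1) \<ominus> y2) \<in> N K"
    using Suc.IH[OF _ x1c] Suc.prems(1) y1(2) ks by auto
  have y2c: "y2 \<in> carrier R" by (rule Spn_carr[OF y2(1)])
  have "x \<ominus> (y1 \<oplus> y2) = (x \<ominus> y1) \<ominus> y2" by (rule alg3[OF Suc.prems(2) y1c y2c])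
  hence "pr (x \<ominus> (y1 \<oplus> y2)) \<in> N K" using y2(2) by simp
  moreover have "Spn K (y1 \<oplus> y2)" by (rule Spn_add[OF y1(1) y2(1)])
  ultimately show ?case by blast
qed

lemma decomp: assumes x: "x \<in> carrier R" shows "\<exists>y z. Spn K y \<and> z \<in> carrier R \<and> x = y \<oplus> z \<otimes> P"
proof -
  have "pr x \<in> N (K - K)" using N_0 pr_closed[OF x] by simp
  then obtain y where y: "Spn K y" "pr (x \<ominus> y) \<in> N K" using iter_K[OF le_refl x] by blast
  have yc: "y \<in> carrier R" by (rule Spn_carr[OF y(1)])
  have "pr (x \<ominus> y) \<in> pr ` Fs K" using y(2) N_sub by blast
  then obtain f where f: "f \<in> Fs K" "pr (x \<ominus> y) = pr f" by blast
  have fc: "f \<in> carrier R" using f(1) by (simp add: Fs_def)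
  have xyc: "x \<ominus> y \<in> carrier R" using x yc by simp
  have "(x \<ominus> y) \<ominus> f \<in> I" using pr_eq_iff[OF xyc fc] f(2) by simp
  then obtain z where z: "z \<in> carrier R" "(x \<ominus> y) \<ominus> f = z \<otimes> P"
    unfolding I_def cgenideal_def by blast
  have "x = (y \<oplus> f) \<oplus> ((x \<ominus> y) \<ominus> f)" by (rule alg4[OF x yc fc])
  hence "x = (y \<oplus> f) \<oplus> z \<otimes> P" using z(2) by simp
  moreover have "Spn K (y \<oplus> f)" by (rule Spn_add[OF y(1) Spn_F[OF f(1)]])
  ultimately show ?thesis using z(1) by blast
qed

lemma iterP: "x \<in> carrier R \<Longrightarrow> \<exists>y z. Spn K y \<and> z \<in> carrier R \<and> x = y \<oplus> z \<otimes> P [^] (t::nat)"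
proof (induction t arbitrary: x)
  case 0
  have "x = \<zero> \<oplus> x \<otimes> P [^] (0::nat)" using 0 by simp
  thus ?case using Spn_zero 0 by blast
next
  case (Suc t)
  obtain y z where yz: "Spn K y" "z \<in> carrier R" "x = y \<oplus> z \<otimes> P [^] t" using Suc.IH[OF Suc.prems] by blast
  obtain y' z' where yz': "Spn K y'" "z' \<in> carrier R" "z = y' \<oplus> z' \<otimes> P" using decomp[OF yz(2)] by blast
  have yc: "y \<in> carrier R" "y' \<in> carrier R" using yz(1) yz'(1) Spn_carr by auto
  have Qc: "P [^] t \<in> carrier R" using P_closed by simp
  have "x = y \<oplus> (y' \<oplus> z' \<otimes> P) \<otimes> P [^] t" using yz(3) yz'(3) by simp
  also have "\<dots> = (y \<oplus> P [^] t \<otimes> y') \<oplus> z' \<otimes> (P [^] t \<otimes> P)"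
    by (rule alg5[OF yc yz'(2) P_closed Qc])
  also have "P [^] t \<otimes> P = P [^] Suc t" by simp
  finally have "x = (y \<oplus> P [^] t \<otimes> y') \<oplus> z' \<otimes> P [^] Suc t" .
  moreover have "Spn K (y \<oplus> P [^] t \<otimes> y')" by (rule Spn_add[OF yz(1) Spn_sc[OF Ppow_Sc yz'(1)]])
  ultimately show ?case using yz'(2) by blast
qed

lemma all_Spn: assumes x: "x \<in> carrier R" shows "Spn K x"
proof -
  obtain y z where yz: "Spn K y" "z \<in> carrier R" "x = y \<oplus> z \<otimes> P [^] K" using iterP[OF x] by blast
  have "z \<otimes> P [^] K \<in> Fs K" by (rule ideal.I_l_closed[OF F_ideal Ppow_F yz(2)])
  hence "Spn K (y \<oplus> z \<otimes> P [^] K)" by (rule Spn_add[OF yz(1) Spn_F])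
  thus ?thesis using yz(3) by simp
qed

end


context main begin

lemma main_thm:
  assumes r: "\<forall>j<s. r j \<in> carrier R"
  shows "(Zp_p p [^]\<^bsub>Zp p\<^esub> A_sum A s) divides\<^bsub>Zp p\<^esub> ring_det (Zp p) s (\<lambda>i j. \<phi> i (r j))"
proof -
  define K where "K = A_sum A s"
  define m where "m = card (E K)"
  obtain g where g: "bij_betw g {0..<m} (E K)"
    unfolding m_def using ex_bij_betw_nat_finite[OF E_fin] by blast
  define C where "C j = (SOME c. \<forall>i<s. \<phi> i (r j) K = (\<Sum>q\<in>E K. c q * \<phi> i (Lf q) K) mod p ^ K)" for j
  have C: "\<phi> i (r j) K = (\<Sum>q\<in>E K. C j q * \<phi> i (Lf q) K) mod p ^ K" if j: "j < s" and i: "i < s" for i j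
  proof -
    have "Spn K (r j)" using all_Spn r j by blast
    hence "\<exists>c. \<forall>i<s. \<phi> i (r j) K = (\<Sum>q\<in>E K. c q * \<phi> i (Lf q) K) mod p ^ K"
      unfolding Spn_def by blast
    hence "\<forall>i<s. \<phi> i (r j) K = (\<Sum>q\<in>E K. C j q * \<phi> i (Lf q) K) mod p ^ K"
      unfolding C_def by (rule someI_ex)
    thus ?thesis using i by blast
  qed
  define cc where "cc j u = C j (g u)" for j u
  define ww where "ww u i = \<phi> i (Lf (g u)) K" for u i
  define lev where "lev u = fst (g u)" for u
  have gE: "g u \<in> E K" if "u < m" for u using g that by (auto simp: bij_betw_def)
  have core: "(\<Sum>\<sigma>\<in>{\<sigma>. \<sigma> permutes {0..<s}}. sign \<sigma> * (\<Prod>i\<in>{0..<s}. \<phi> i (r (\<sigma> i)) K)) mod p ^ K = 0"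
  proof (rule det_core[where cc=cc and ww=ww and lev=lev and d="graded_dim A" and m=m])
    fix i j assume i: "i < s" and j: "j < s"
    have "(\<Sum>u\<in>{0..<m}. cc j u * ww u i) = (\<Sum>q\<in>E K. C j q * \<phi> i (Lf q) K)"
      unfolding cc_def ww_def by (rule sum.reindex_bij_betw[OF g])
    thus "\<phi> i (r j) K mod p ^ K = (\<Sum>u\<in>{0..<m}. cc j u * ww u i) mod p ^ K"
      using C[OF j i] by simp
  next
    fix u i assume u: "u < m" and i: "i < s"
    have L: "Lf (g u) \<in> Fs (fst (g u))" using Lf_E[OF gE[OF u]] by blast
    have lt: "fst (g u) < K" using gE[OF u] by (auto simp: E_def)
    have "\<phi> i (Lf (g u)) (fst (g u)) = 0" using L i by (simp add: Fs_def)
    moreover have "\<phi> i (Lf (g u)) \<in> carrier (Zp p)" using L i by (intro phi_closed) (auto simp: Fs_def)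
    ultimately show "p ^ lev u dvd ww u i" unfolding lev_def ww_def
      using comp_dvd lt by simp
  next
    fix k
    let ?U = "{u \<in> {0..<m}. lev u = k}"
    have inj: "inj_on g ?U" using g by (auto simp: bij_betw_def inj_on_def)
    have sub: "g ` ?U \<subseteq> {k} \<times> Sb k"
    proof
      fix q assume "q \<in> g ` ?U"
      then obtain u where u: "u < m" "lev u = k" "q = g u" by auto
      have "g u \<in> E K" by (rule gE[OF u(1)])
      hence "snd (g u) \<in> Sb (fst (g u))" by (auto simp: E_def)
      thus "q \<in> {k} \<times> Sb k" using u by (cases "g u") (auto simp: lev_def)
    qed
    have "card ?U \<le> card ({k} \<times> Sb k)"
      by (rule card_inj_on_le[OF inj sub]) (simp add: Sb_fin)
    also have "\<dots> = card (Sb k)" by (simp add: card_cartesian_product)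
    also have "\<dots> = graded_dim A k" by (simp add: Sb_card)
    finally show "card ?U \<le> graded_dim A k" .
  next
    show "K \<le> (\<Sum>i = 1..s. LEAST k. i \<le> (\<Sum>j\<le>k. graded_dim A j))"
      by (simp add: K_def A_sum_def n_seq_def)
  qed
  have Mc: "\<phi> i (r j) \<in> carrier (Zp p)" if "i < s" "j < s" for i j
    using that r by (intro phi_closed) auto
  have "ring_det (Zp p) s (\<lambda>i j. \<phi> i (r j)) K = 0"
    using ring_det_comp[of s "\<lambda>i j. \<phi> i (r j)" K] Mc core by simp
  thus ?thesis unfolding K_def by (intro divides_crit ring_det_closed) (use Mc in auto)
qed

end

theorem lemma2p4:
  fixes R :: "('a, 'b) ring_scheme" and p :: int and \<iota> :: "(nat \<Rightarrow> int) \<Rightarrow> 'a"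
    and s :: nat and r :: "nat \<Rightarrow> 'a" and \<phi> :: "nat \<Rightarrow> 'a \<Rightarrow> (nat \<Rightarrow> int)"
  assumes "Factorial_Ring.prime p"
    and "local_ring R" and "noetherian_ring R"
    and "\<iota> \<in> ring_hom (Zp p) R" and "inj_on \<iota> (carrier (Zp p))"
    and "n_seq_has (R Quot (PIdl\<^bsub>R\<^esub> (\<iota> (Zp_p p)))) s"
    and "\<forall>j<s. r j \<in> carrier R"
    and "\<forall>i<s. \<phi> i \<in> ring_hom R (Zp p)"
  shows "(Zp_p p [^]\<^bsub>Zp p\<^esub> A_sum (R Quot (PIdl\<^bsub>R\<^esub> (\<iota> (Zp_p p)))) s)
           divides\<^bsub>Zp p\<^esub> ring_det (Zp p) s (\<lambda>i j. \<phi> i (r j))"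
proof -
  have p2: "p \<ge> 2" using assms(1) prime_ge_2_int by blast
  interpret zp p using p2 by unfold_locales
  show ?thesis
  proof (cases "s = 0")
    case True
    have "A_sum (R Quot (PIdl\<^bsub>R\<^esub> (\<iota> (Zp_p p)))) s = 0" using True by (simp add: A_sum_def)
    moreover have "ring_det (Zp p) s (\<lambda>i j. \<phi> i (r j)) \<in> carrier (Zp p)"
      using True by (intro ring_det_closed) auto
    ultimately show ?thesis unfolding factor_def by (intro bexI[where x="ring_det (Zp p) s (\<lambda>i j. \<phi> i (r j))"]) simp_all
  next
    case False
    have "main p R \<iota> s \<phi>"
      unfolding main_def main_axioms_def using assms False zp_axioms by auto
    then interpret main p R \<iota> s \<phi> .
    have "A = R Quot (PIdl\<^bsub>R\<^esub> (\<iota> (Zp_p p)))" by (simp add: A_def I_def P_def)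
    thus ?thesis using main_thm[OF assms(7)] by simp
  qed
qed


end
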